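(* Let $Z$ be a fat point scheme in $\mathbb{P}^1\times\mathbb{P}^1$ and let $\alpha_Z$, $\beta_Z$ be as defined below. Then: (i) for every fixed $j\in\mathbb{N}$ and every $i\ge|\alpha_Z|-1$ (note $|\alpha_Z|=l_1+\dots+l_r$), $$H_Z(i,j)=\sum_{k=1}^{j+1}\#\{\text{entries of }\alpha_Z\text{ that are }\ge k\};$$ (ii) for every fixed $i\in\mathbb{N}$ and every $j\ge|\beta_Z|-1$ (note $|\beta_Z|=l'_1+\dots+l'_t$), $$H_Z(i,j)=\sum_{k=1}^{i+1}\#\{\text{entries of }\beta_Z\text{ that are }\ge k\}.$$ Here entries are counted with multiplicity.
   Context: $\mathbf{k}$ algebraically closed, $R=\mathbf{k}[x_0,x_1,y_0,y_1]$ bigraded with $\deg x_i=(1,0)$, $\deg y_i=(0,1)$; a point $[a_0:a_1]\times[b_0:b_1]$ has ideal $(a_1x_0-a_0x_1,b_1y_0-b_0y_1)$; a fat point scheme $Z=\{(P_1;m_1),\dots,(P_s;m_s)\}$ (distinct points, positive multiplicities) has ideal $I_Z=\bigcap\wp_{P_i}^{m_i}$ and Hilbert function $H_Z(i,j)=\dim_{\mathbf{k}}(R/I_Z)_{(i,j)}$. Let $\pi_1,\pi_2$ be the two projections $\mathbb{P}^1\times\mathbb{P}^1\to\mathbb{P}^1$, $\pi_1(\mathrm{Supp}\,Z)=\{R_1,\dots,R_r\}$ and $\pi_2(\mathrm{Supp}\,Z)=\{Q_1,\dots,Q_t\}$ (distinct), and let $m_{ij}$ be the multiplicity of $R_i\times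 Q_j$ in $Z$ ($m_{ij}=0$ if this point is not in the support). Write $(n)_+=\max\{0,n\}$. For $i=1,\dots,r$ let $l_i=\max_j m_{ij}$ and $a_{i,k}=\sum_{j=1}^t(m_{ij}-k)_+$ for $0\le k\le l_i-1$; $\alpha_Z$ is the tuple consisting of all $a_{i,k}$ ($1\le i\le r$, $0\le k\le l_i-1$), listed in non-increasing order. For $j=1,\dots,t$ let $l'_j=\max_i m_{ij}$ and $b_{j,k}=\sum_{i=1}^r(m_{ij}-k)_+$ for $0\le k\le l'_j-1$; $\beta_Z$ is the tuple of all $b_{j,k}$ in non-increasing order. $|\alpha_Z|$ denotes the length of the tuple. *)

theory Defs
  imports Main "HOL-Library.Poly_Mapping" "HOL-Library.Multiset"
    "HOL-Computational_Algebra.Polynomial"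
begin

text \<open>Variables: 0 = x0, 1 = x1, 2 = y0, 3 = y1.\<close>

type_synonym 'k mpoly = "(nat \<Rightarrow>\<^sub>0 nat) \<Rightarrow>\<^sub>0 'k"

definition Var :: "nat \<Rightarrow> 'k::comm_ring_1 mpoly" where
  "Var v = Poly_Mapping.single (Poly_Mapping.single v 1) 1"

definition Const :: "'k::comm_ring_1 \<Rightarrow> 'k mpoly" where
  "Const c = Poly_Mapping.single 0 c"

definition scal :: "'k::comm_ring_1 \<Rightarrow> 'k mpoly \<Rightarrow> 'k mpoly" where
  "scal c p = Const c * p"

definition inR :: "'k::comm_ring_1 mpoly \<Rightarrow> bool" where
  "inR p \<longleftrightarrow> (\<forall>\<mu>\<in>Poly_Mapping.keys p. Poly_Mapping.keys \<mu> \<subseteq> {0,1,2,3})"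

definition bideg :: "(nat \<Rightarrow>\<^sub>0 nat) \<Rightarrow> nat \<times> nat" where
  "bideg \<mu> = (Poly_Mapping.lookup \<mu> 0 + Poly_Mapping.lookup \<mu> 1, Poly_Mapping.lookup \<mu> 2 + Poly_Mapping.lookup \<mu> 3)"

definition Rdeg :: "nat \<Rightarrow> nat \<Rightarrow> 'k::comm_ring_1 mpoly set" where
  "Rdeg i j = {p. inR p \<and> (\<forall>\<mu>\<in>Poly_Mapping.keys p. bideg \<mu> = (i, j))}"

definition ideal_gen :: "'k::comm_ring_1 mpoly set \<Rightarrow> 'k mpoly set" where
  "ideal_gen S = {\<Sum>l<n. c l * s l | (n::nat) c s. (\<forall>l<n. inR (c l) \<and> s l \<in> S)}"

definition ideal_prod :: "'k::comm_ring_1 mpoly set \<Rightarrow> 'k mpoly set \<Rightarrow> 'k mpoly set" where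
  "ideal_prod I J = ideal_gen {a * b | a b. a \<in> I \<and> b \<in> J}"

fun ideal_pow :: "'k::comm_ring_1 mpoly set \<Rightarrow> nat \<Rightarrow> 'k mpoly set" where
  "ideal_pow I 0 = {p. inR p}"
| "ideal_pow I (Suc m) = ideal_prod (ideal_pow I m) I"

text \<open>A point of P^1 is given by a representative (a0,a1) \<noteq> (0,0);
  pnorm gives the canonical representative of its class.\<close>
definition pnorm :: "'k::field \<times> 'k \<Rightarrow> 'k \<times> 'k" where
  "pnorm p = (if fst p = 0 then (0, 1) else (1, snd p / fst p))"

definition pt_ideal :: "'k::field \<times> 'k \<Rightarrow> 'k \<times> 'k \<Rightarrow> 'k mpoly set" where
  "pt_ideal P Q = ideal_gen
     {Const (snd P) * Var 0 - Const (fst P) * Var 1,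
      Const (snd Q) * Var 2 - Const (fst Q) * Var 3}"

text \<open>A fat point scheme is a list of triples (P, Q, m): the point P x Q with
  multiplicity m.\<close>
type_synonym 'k fatpts = "(('k \<times> 'k) \<times> ('k \<times> 'k) \<times> nat) list"

definition fat_point_scheme :: "'k::field fatpts \<Rightarrow> bool" where
  "fat_point_scheme Z \<longleftrightarrow>
     (\<forall>(P, Q, m)\<in>set Z. P \<noteq> (0, 0) \<and> Q \<noteq> (0, 0) \<and> m > 0) \<and>
     distinct (map (\<lambda>(P, Q, m). (pnorm P, pnorm Q)) Z)"

definition I_Z :: "'k::field fatpts \<Rightarrow> 'k mpoly set" where
  "I_Z Z = {p. inR p} \<inter> (\<Inter>(P, Q, m)\<in>set Z. ideal_pow (pt_ideal P Q) m)"

text \<open>H_Z(i,j) = dim_k (R/I_Z)_(i,j) = dim R_(i,j) - dim (I_Z)_(i,j).\<close>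
definition HF :: "'k::field fatpts \<Rightarrow> nat \<Rightarrow> nat \<Rightarrow> nat" where
  "HF Z i j = vector_space.dim scal (Rdeg i j :: 'k mpoly set)
              - vector_space.dim scal (I_Z Z \<inter> Rdeg i j)"

definition proj1 :: "'k::field fatpts \<Rightarrow> ('k \<times> 'k) set" where
  "proj1 Z = (\<lambda>(P, Q, m). pnorm P) ` set Z"

definition proj2 :: "'k::field fatpts \<Rightarrow> ('k \<times> 'k) set" where
  "proj2 Z = (\<lambda>(P, Q, m). pnorm Q) ` set Z"

text \<open>Multiplicity of R x Q in Z (0 if not in the support); R, Q normalized.\<close>
definition mult :: "'k::field fatpts \<Rightarrow> 'k \<times> 'k \<Rightarrow> 'k \<times> 'k \<Rightarrow> nat" where
  "mult Z R Q = sum_list (map (\<lambda>(P', Q', m). m)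
      (filter (\<lambda>(P', Q', m). pnorm P' = R \<and> pnorm Q' = Q) Z))"

definition alpha :: "'k::field fatpts \<Rightarrow> nat multiset" where
  "alpha Z = (\<Sum>R\<in>proj1 Z.
     mset (map (\<lambda>k. \<Sum>Q\<in>proj2 Z. mult Z R Q - k)
               [0..<Max ((\<lambda>Q. mult Z R Q) ` proj2 Z)]))"

definition beta :: "'k::field fatpts \<Rightarrow> nat multiset" where
  "beta Z = (\<Sum>Q\<in>proj2 Z.
     mset (map (\<lambda>k. \<Sum>R\<in>proj1 Z. mult Z R Q - k)
               [0..<Max ((\<lambda>R. mult Z R Q) ` proj1 Z)]))"

end

theory Submission
  imports Defs "HOL-Library.Product_Lexorder"
begin


section \<open>Linear functionals given by weights\<close>

definition lf :: "((nat \<Rightarrow>\<^sub>0 nat) \<Rightarrow> 'k::comm_ring_1) \<Rightarrow> 'k mpoly \<Rightarrow> 'k" where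
  "lf w f = (\<Sum>\<mu>\<in>Poly_Mapping.keys f. Poly_Mapping.lookup f \<mu> * w \<mu>)"

lemma lf_superset:
  assumes "finite S" "Poly_Mapping.keys f \<subseteq> S"
  shows "lf w f = (\<Sum>\<mu>\<in>S. Poly_Mapping.lookup f \<mu> * w \<mu>)"
  unfolding lf_def
  by (rule sum.mono_neutral_left) (use assms in \<open>auto simp: in_keys_iff\<close>)

lemma lf_add: "lf w (f + g) = lf w f + lf w g"
proof -
  let ?S = "Poly_Mapping.keys f \<union> Poly_Mapping.keys g"
  have "lf w (f + g) = (\<Sum>\<mu>\<in>?S. Poly_Mapping.lookup (f+g) \<mu> * w \<mu>)"
    by (rule lf_superset) (auto simp: keys_add intro: order.trans[OF Poly_Mapping.keys_add])
  also have "\<dots> = (\<Sum>\<mu>\<in>?S. Poly_Mapping.lookup f \<mu> * w \<mu>) + (\<Sum>\<mu>\<in>?S. Poly_Mapping.lookup g \<mu> * w \<mu>)"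
    by (simp add: lookup_add algebra_simps sum.distrib)
  also have "\<dots> = lf w f + lf w g"
    by (subst (1 2) lf_superset[of ?S]) auto
  finally show ?thesis .
qed

lemma lf_zero[simp]: "lf w 0 = 0"
  by (simp add: lf_def)

lemma lf_single[simp]: "lf w (Poly_Mapping.single \<mu> c) = c * w \<mu>"
  by (subst lf_superset[of "{\<mu>}"]) auto

lemma lf_sum: "lf w (sum F I) = (\<Sum>i\<in>I. lf w (F i))"
  by (induction I rule: infinite_finite_induct) (auto simp: lf_add)

lemma lf_uminus: "lf w (- f) = - lf w f"
  using lf_add[of w f "-f"] by (simp add: eq_neg_iff_add_eq_0 add.commute)

lemma lf_diff: "lf w (f - g) = lf w f - lf w g"
  using lf_add[of w f "-g"] lf_uminus[of w g] by simp

lemma poly_mapping_expand: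
  "f = (\<Sum>\<mu>\<in>Poly_Mapping.keys f. Poly_Mapping.single \<mu> (Poly_Mapping.lookup f \<mu>))"
proof (rule poly_mapping_eqI)
  fix \<nu>
  have "Poly_Mapping.lookup (\<Sum>\<mu>\<in>Poly_Mapping.keys f. Poly_Mapping.single \<mu> (Poly_Mapping.lookup f \<mu>)) \<nu>
     = (\<Sum>\<mu>\<in>Poly_Mapping.keys f. Poly_Mapping.lookup (Poly_Mapping.single \<mu> (Poly_Mapping.lookup f \<mu>)) \<nu>)"
    by (simp add: lookup_sum)
  also have "\<dots> = (\<Sum>\<mu>\<in>Poly_Mapping.keys f. if \<mu> = \<nu> then Poly_Mapping.lookup f \<mu> else 0)"
    by (intro sum.cong) (auto simp: lookup_single)
  also have "\<dots> = Poly_Mapping.lookup f \<nu>"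
    by (auto simp: sum.delta in_keys_iff)
  finally show "Poly_Mapping.lookup f \<nu> = Poly_Mapping.lookup (\<Sum>\<mu>\<in>Poly_Mapping.keys f. Poly_Mapping.single \<mu> (Poly_Mapping.lookup f \<mu>)) \<nu>" ..
qed

lemma lf_mult_expand:
  "lf w (f * g) = (\<Sum>\<mu>\<in>Poly_Mapping.keys f. \<Sum>\<nu>\<in>Poly_Mapping.keys g.
      Poly_Mapping.lookup f \<mu> * Poly_Mapping.lookup g \<nu> * w (\<mu> + \<nu>))"
proof -
  have "f * g = (\<Sum>\<mu>\<in>Poly_Mapping.keys f. Poly_Mapping.single \<mu> (Poly_Mapping.lookup f \<mu>)) *
                (\<Sum>\<nu>\<in>Poly_Mapping.keys g. Poly_Mapping.single \<nu> (Poly_Mapping.lookup g \<nu>))"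
    by (subst (1) poly_mapping_expand, subst (1) poly_mapping_expand[of g]) rule
  also have "\<dots> = (\<Sum>\<mu>\<in>Poly_Mapping.keys f. \<Sum>\<nu>\<in>Poly_Mapping.keys g.
      Poly_Mapping.single (\<mu> + \<nu>) (Poly_Mapping.lookup f \<mu> * Poly_Mapping.lookup g \<nu>))"
    by (simp add: sum_product mult_single)
  finally show ?thesis by (simp add: lf_sum)
qed

lemma lookup_Const_mult: "Poly_Mapping.lookup (Const c * f) \<mu> = c * Poly_Mapping.lookup f \<mu>"
proof -
  have "Const c * f = Poly_Mapping.map ((*) c) f"
    by (simp add: Const_def mult_map_scale_conv_mult)
  then show ?thesis by (simp add: map.rep_eq when_def)
qed

lemma lf_Const_mult: "lf w (Const c * f) = c * lf w f"
proof -
  have "lf w (Const c * f) = (\<Sum>\<mu>\<in>Poly_Mapping.keys f. Poly_Mapping.lookup (Const c * f) \<mu> * w \<mu>)"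
    by (rule lf_superset) (auto simp: in_keys_iff lookup_Const_mult)
  then show ?thesis by (simp add: lookup_Const_mult lf_def sum_distrib_left mult.assoc)
qed

lemma lf_leibniz:
  assumes W: "\<And>k b \<mu> \<nu>. W k b (\<mu> + \<nu>) = (\<Sum>k1\<le>k. \<Sum>b1\<le>b. W k1 b1 \<mu> * W (k - k1) (b - b1) \<nu>)"
  shows "lf (W k b) (f * g) = (\<Sum>k1\<le>k. \<Sum>b1\<le>b. lf (W k1 b1) f * lf (W (k - k1) (b - b1)) g)"
proof -
  have "lf (W k b) (f * g) = (\<Sum>\<mu>\<in>Poly_Mapping.keys f. \<Sum>\<nu>\<in>Poly_Mapping.keys g.
      \<Sum>k1\<le>k. \<Sum>b1\<le>b. (Poly_Mapping.lookup f \<mu> * W k1 b1 \<mu>) * (Poly_Mapping.lookup g \<nu> * W (k - k1) (b - b1) \<nu>))"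
    by (simp add: lf_mult_expand W sum_distrib_left mult_ac)
  also have "\<dots> = (\<Sum>k1\<le>k. \<Sum>b1\<le>b. \<Sum>\<mu>\<in>Poly_Mapping.keys f. \<Sum>\<nu>\<in>Poly_Mapping.keys g.
      (Poly_Mapping.lookup f \<mu> * W k1 b1 \<mu>) * (Poly_Mapping.lookup g \<nu> * W (k - k1) (b - b1) \<nu>))"
    by (subst sum.swap, subst (2) sum.swap, subst (3) sum.swap, subst (2) sum.swap) simp
  also have "\<dots> = (\<Sum>k1\<le>k. \<Sum>b1\<le>b. lf (W k1 b1) f * lf (W (k - k1) (b - b1)) g)"
    by (simp add: lf_def sum_product)
  finally show ?thesis .
qed

section \<open>Hasse weights\<close>

definition hw :: "nat \<Rightarrow> 'k::comm_ring_1 \<Rightarrow> nat \<Rightarrow> (nat \<Rightarrow>\<^sub>0 nat) \<Rightarrow> 'k" where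
  "hw v t k \<mu> = of_nat (Poly_Mapping.lookup \<mu> v choose k) * t ^ (Poly_Mapping.lookup \<mu> v - k)"

lemma hw_vandermonde_nat:
  "of_nat ((p + q) choose k) * (t::'k::comm_ring_1) ^ (p + q - k) =
   (\<Sum>k1\<le>k. (of_nat (p choose k1) * t ^ (p - k1)) * (of_nat (q choose (k - k1)) * t ^ (q - (k - k1))))"
proof -
  have "(\<Sum>k1\<le>k. (of_nat (p choose k1) * t ^ (p - k1)) * (of_nat (q choose (k - k1)) * t ^ (q - (k - k1))))
      = (\<Sum>k1\<le>k. of_nat ((p choose k1) * (q choose (k - k1))) * t ^ (p + q - k))"
  proof (intro sum.cong refl)
    fix k1 assume "k1 \<in> {..k}"
    then have k1: "k1 \<le> k" by simp
    show "(of_nat (p choose k1) * t ^ (p - k1)) * (of_nat (q choose (k - k1)) * t ^ (q - (k - k1)))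
        = of_nat ((p choose k1) * (q choose (k - k1))) * t ^ (p + q - k)"
    proof (cases "k1 \<le> p \<and> k - k1 \<le> q")
      case True
      then have "p - k1 + (q - (k - k1)) = p + q - k" using k1 by linarith
      then show ?thesis by (simp add: power_add[symmetric] mult_ac)
    next
      case False
      then show ?thesis by (auto simp: binomial_eq_0 not_le)
    qed
  qed
  also have "\<dots> = of_nat (\<Sum>k1\<le>k. (p choose k1) * (q choose (k - k1))) * t ^ (p + q - k)"
    by (simp add: sum_distrib_right)
  also have "\<dots> = of_nat ((p + q) choose k) * t ^ (p + q - k)"
    by (simp add: vandermonde)
  finally show ?thesis ..
qed

lemma hw_add: "hw v t k (\<mu> + \<nu>) = (\<Sum>k1\<le>k. hw v t k1 \<mu> * hw v t (k - k1) \<nu>)"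
  unfolding hw_def by (simp add: lookup_add hw_vandermonde_nat)

definition W2 :: "nat \<Rightarrow> 'k::comm_ring_1 \<Rightarrow> nat \<Rightarrow> 'k \<Rightarrow> nat \<Rightarrow> nat \<Rightarrow> (nat \<Rightarrow>\<^sub>0 nat) \<Rightarrow> 'k" where
  "W2 va ta vb tb k b \<mu> = hw va ta k \<mu> * hw vb tb b \<mu>"

lemma W2_add: "W2 va ta vb tb k b (\<mu> + \<nu>) =
  (\<Sum>k1\<le>k. \<Sum>b1\<le>b. W2 va ta vb tb k1 b1 \<mu> * W2 va ta vb tb (k - k1) (b - b1) \<nu>)"
  unfolding W2_def hw_add
  by (simp add: sum_product mult_ac)

lemma lf_W2_mult: "lf (W2 va ta vb tb k b) (f * g) =
  (\<Sum>k1\<le>k. \<Sum>b1\<le>b. lf (W2 va ta vb tb k1 b1) f * lf (W2 va ta vb tb (k - k1) (b - b1)) g)"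
  by (rule lf_leibniz) (rule W2_add)



lemma inR_add: "inR f \<Longrightarrow> inR g \<Longrightarrow> inR (f + g)"
proof -
  assume f: "inR f" and g: "inR g"
  show "inR (f + g)" unfolding inR_def
  proof
    fix \<mu> assume "\<mu> \<in> Poly_Mapping.keys (f + g)"
    then have "\<mu> \<in> Poly_Mapping.keys f \<or> \<mu> \<in> Poly_Mapping.keys g"
      using Poly_Mapping.keys_add[of f g] by auto
    then show "Poly_Mapping.keys \<mu> \<subseteq> {0, 1, 2, 3}"
      using f g unfolding inR_def by auto
  qed
qed

lemma inR_zero[simp]: "inR 0" by (simp add: inR_def)

lemma inR_uminus: "inR f \<Longrightarrow> inR (- f)"
  unfolding inR_def by (simp add: keys_minus)

lemma inR_diff: "inR f \<Longrightarrow> inR g \<Longrightarrow> inR (f - g)"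
  using inR_add[of f "-g"] inR_uminus[of g] by simp

lemma inR_mult: "inR f \<Longrightarrow> inR g \<Longrightarrow> inR (f * g)"
proof -
  assume f: "inR f" and g: "inR g"
  show "inR (f * g)" unfolding inR_def
  proof
    fix \<mu> assume "\<mu> \<in> Poly_Mapping.keys (f * g)"
    then obtain a b where ab: "\<mu> = a + b" "a \<in> Poly_Mapping.keys f" "b \<in> Poly_Mapping.keys g"
      using keys_mult[of f g] by auto
    have "Poly_Mapping.keys a \<subseteq> {0, 1, 2, 3}" "Poly_Mapping.keys b \<subseteq> {0, 1, 2, 3}"
      using f g ab unfolding inR_def by auto
    moreover have "Poly_Mapping.keys \<mu> \<subseteq> Poly_Mapping.keys a \<union> Poly_Mapping.keys b"
      using ab(1) Poly_Mapping.keys_add[of a b] by simp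
    ultimately show "Poly_Mapping.keys \<mu> \<subseteq> {0, 1, 2, 3}" by auto
  qed
qed

lemma inR_single: "Poly_Mapping.keys \<mu> \<subseteq> {0,1,2,3} \<Longrightarrow> inR (Poly_Mapping.single \<mu> c)"
  by (simp add: inR_def)

lemma inR_Const[simp]: "inR (Const c)"
  by (simp add: Const_def inR_def)

lemma inR_one[simp]: "inR 1"
  using inR_Const[of 1] by (simp add: Const_def)

lemma inR_Var: "v \<in> {0,1,2,3} \<Longrightarrow> inR (Var v)"
  by (simp add: Var_def inR_def)

lemma inR_power: "inR f \<Longrightarrow> inR (f ^ n)"
  by (induction n) (auto intro: inR_mult)

lemma inR_sum: "(\<And>i. i \<in> I \<Longrightarrow> inR (F i)) \<Longrightarrow> inR (sum F I)"
  by (induction I rule: infinite_finite_induct) (auto intro: inR_add)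

lemma inR_prod: "(\<And>i. i \<in> I \<Longrightarrow> inR (F i)) \<Longrightarrow> inR (prod F I)"
  by (induction I rule: infinite_finite_induct) (auto intro: inR_mult)

lemma ideal_gen_single: assumes "s \<in> S" "inR c" shows "c * s \<in> ideal_gen S"
proof -
  have "c * s = (\<Sum>l<(1::nat). (\<lambda>_. c) l * (\<lambda>_. s) l) \<and> (\<forall>l<(1::nat). inR ((\<lambda>_. c) l) \<and> (\<lambda>_. s) l \<in> S)"
    using assms by simp
  then show ?thesis unfolding ideal_gen_def by (intro CollectI exI)
qed

lemma ideal_gen_mult:
  assumes "x \<in> ideal_gen S" "inR g"
  shows "g * x \<in> ideal_gen S"
proof -
  have "\<exists>(n::nat) c s. x = (\<Sum>l<n. c l * s l) \<and> (\<forall>l<n. inR (c l) \<and> s l \<in> S)"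
    using assms(1) unfolding ideal_gen_def by simp
  then obtain n :: nat and c s where x: "x = (\<Sum>l<n. c l * s l)" and cs: "\<forall>l<n. inR (c l) \<and> s l \<in> S"
    by auto
  have "g * x = (\<Sum>l<n. (g * c l) * s l)"
    by (simp add: x sum_distrib_left mult.assoc)
  moreover have "\<forall>l<n. inR (g * c l) \<and> s l \<in> S" using cs assms(2) by (auto intro: inR_mult)
  ultimately show ?thesis unfolding ideal_gen_def
    by (intro CollectI exI[where x=n] exI[where x="\<lambda>l. g * c l"] exI[where x=s] conjI) (simp_all add: mult.assoc)
qed

lemma ideal_pow_mult:
  assumes "x \<in> ideal_pow I m" "inR g"
  shows "g * x \<in> ideal_pow I m"
proof (cases m)
  case 0
  then have "inR x" using assms(1) by simp
  then have "inR (g * x)" using assms(2) by (rule inR_mult[rotated])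
  then show ?thesis using 0 by simp
next
  case (Suc m')
  then have "x \<in> ideal_gen {a * b |a b. a \<in> ideal_pow I m' \<and> b \<in> I}"
    using assms(1) by (simp only: ideal_pow.simps ideal_prod_def)
  then have "g * x \<in> ideal_gen {a * b |a b. a \<in> ideal_pow I m' \<and> b \<in> I}"
    using assms(2) by (rule ideal_gen_mult)
  then show ?thesis using Suc by (simp only: ideal_pow.simps ideal_prod_def)
qed

lemma ideal_pow_Suc_prod:
  assumes "x \<in> ideal_pow I m" "y \<in> I"
  shows "x * y \<in> ideal_pow I (Suc m)"
proof -
  have "x * y \<in> {a * b |a b. a \<in> ideal_pow I m \<and> b \<in> I}" using assms by blast
  from ideal_gen_single[OF this inR_one] show ?thesis by (simp only: ideal_pow.simps ideal_prod_def mult_1)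
qed


section \<open>Vanishing conditions\<close>

definition dv :: "nat \<Rightarrow> nat \<Rightarrow> 'k::field \<times> 'k \<Rightarrow> nat" where
  "dv v0 v1 p = (if fst p = 0 then v0 else v1)"

definition tv :: "'k::field \<times> 'k \<Rightarrow> 'k" where
  "tv p = (if fst p = 0 then 0 else snd p)"

definition lin :: "nat \<Rightarrow> nat \<Rightarrow> 'k::field \<times> 'k \<Rightarrow> 'k mpoly" where
  "lin v0 v1 P = Const (snd P) * Var v0 - Const (fst P) * Var v1"

lemma lf_Var: "lf w (Var v) = w (Poly_Mapping.single v 1)"
  by (simp add: Var_def)

lemma W2_00: "W2 va ta vb tb 0 0 \<mu> = ta ^ Poly_Mapping.lookup \<mu> va * tb ^ Poly_Mapping.lookup \<mu> vb"
  by (simp add: W2_def hw_def)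

lemma fst_pnorm_eq0: "fst (pnorm P) = 0 \<longleftrightarrow> fst P = 0"
  by (simp add: pnorm_def)

lemma lin_vanish_at:
  assumes "v0 \<noteq> v1" "vb \<noteq> v0" "vb \<noteq> v1" "P \<noteq> (0, 0)"
  shows "lf (W2 (dv v0 v1 (pnorm P)) (tv (pnorm P)) vb tb 0 0) (lin v0 v1 P) = 0"
proof (cases "fst P = 0")
  case True
  then show ?thesis using assms
    by (simp add: lin_def lf_diff lf_Const_mult lf_Var W2_00 dv_def tv_def fst_pnorm_eq0 lookup_single)
next
  case False
  then have "pnorm P = (1, snd P / fst P)" by (simp add: pnorm_def)
  then show ?thesis using assms False
    by (simp add: lin_def lf_diff lf_Const_mult lf_Var W2_00 dv_def tv_def lookup_single)
qed

locale sides =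
  fixes a0 a1 b0 b1 :: nat
  assumes dist: "distinct [a0, a1, b0, b1]" and vars: "{a0, a1, b0, b1} = {0, 1, 2, 3}"
begin

definition TH :: "'k::field \<times> 'k \<Rightarrow> 'k \<times> 'k \<Rightarrow> nat \<Rightarrow> nat \<Rightarrow> 'k mpoly \<Rightarrow> 'k" where
  "TH p q k b = lf (W2 (dv a0 a1 p) (tv p) (dv b0 b1 q) (tv q) k b)"

definition vanish :: "'k::field \<times> 'k \<Rightarrow> 'k \<times> 'k \<Rightarrow> nat \<Rightarrow> 'k mpoly \<Rightarrow> bool" where
  "vanish p q m f \<longleftrightarrow> (\<forall>k b. k + b < m \<longrightarrow> TH p q k b f = 0)"

lemma TH_mult: "TH p q k b (f * g) = (\<Sum>k1\<le>k. \<Sum>b1\<le>b. TH p q k1 b1 f * TH p q (k - k1) (b - b1) g)"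
  unfolding TH_def by (rule lf_W2_mult)

lemma vanish_mult_left:
  assumes "vanish p q m f"
  shows "vanish p q m (g * f)"
  unfolding vanish_def
proof (intro allI impI)
  fix k b :: nat assume kb: "k + b < m"
  have "TH p q k b (g * f) = (\<Sum>k1\<le>k. \<Sum>b1\<le>b. TH p q k1 b1 g * TH p q (k - k1) (b - b1) f)"
    by (rule TH_mult)
  also have "\<dots> = 0"
  proof (intro sum.neutral ballI)
    fix k1 b1 assume "k1 \<in> {..k}" "b1 \<in> {..b}"
    then have "k - k1 + (b - b1) < m" using kb by auto
    then show "TH p q k1 b1 g * TH p q (k - k1) (b - b1) f = 0"
      using assms unfolding vanish_def by simp
  qed
  finally show "TH p q k b (g * f) = 0" .
qed

lemma vanish_mult:
  assumes "vanish p q m f" "vanish p q 1 g"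
  shows "vanish p q (Suc m) (f * g)"
  unfolding vanish_def
proof (intro allI impI)
  fix k b :: nat assume kb: "k + b < Suc m"
  have "TH p q k b (f * g) = (\<Sum>k1\<le>k. \<Sum>b1\<le>b. TH p q k1 b1 f * TH p q (k - k1) (b - b1) g)"
    by (rule TH_mult)
  also have "\<dots> = 0"
  proof (intro sum.neutral ballI)
    fix k1 b1 assume "k1 \<in> {..k}" "b1 \<in> {..b}"
    then have "k1 + b1 < m \<or> (k - k1) + (b - b1) < 1" using kb by auto
    then show "TH p q k1 b1 f * TH p q (k - k1) (b - b1) g = 0"
      using assms unfolding vanish_def by auto
  qed
  finally show "TH p q k b (f * g) = 0" .
qed

lemma vanish_add: "vanish p q m f \<Longrightarrow> vanish p q m g \<Longrightarrow> vanish p q m (f + g)"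
  unfolding vanish_def TH_def by (simp add: lf_add)

lemma vanish_zero[simp]: "vanish p q m 0"
  unfolding vanish_def TH_def by simp

lemma vanish_0[simp]: "vanish p q 0 f"
  unfolding vanish_def by simp

lemma vanish_sum: "(\<And>i. i \<in> I \<Longrightarrow> vanish p q m (F i)) \<Longrightarrow> vanish p q m (sum F I)"
  by (induction I rule: infinite_finite_induct) (auto intro: vanish_add)

lemma vanish_ideal_gen:
  assumes "\<And>s. s \<in> S \<Longrightarrow> vanish p q m s" "x \<in> ideal_gen S"
  shows "vanish p q m x"
proof -
  have "\<exists>(n::nat) c s. x = (\<Sum>l<n. c l * s l) \<and> (\<forall>l<n. inR (c l) \<and> s l \<in> S)"
    using assms(2) unfolding ideal_gen_def by simp
  then obtain n :: nat and c s where x: "x = (\<Sum>l<n. c l * s l)" and cs: "\<forall>l<n. inR (c l) \<and> s l \<in> S"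
    by auto
  show ?thesis unfolding x
    by (rule vanish_sum, rule vanish_mult_left) (use cs assms(1) in auto)
qed

lemma vanish_ideal_pow:
  assumes "\<And>s. s \<in> S \<Longrightarrow> vanish p q 1 s"
  shows "x \<in> ideal_pow (ideal_gen S) m \<Longrightarrow> vanish p q m x"
proof (induction m arbitrary: x)
  case 0
  then show ?case by simp
next
  case (Suc m)
  have gen: "vanish p q (Suc m) y" if y: "y \<in> {a * b |a b. a \<in> ideal_pow (ideal_gen S) m \<and> b \<in> ideal_gen S}" for y
  proof -
    obtain a b where "y = a * b" "a \<in> ideal_pow (ideal_gen S) m" "b \<in> ideal_gen S" using y by blast
    moreover have "vanish p q 1 b" using vanish_ideal_gen[OF assms] \<open>b \<in> ideal_gen S\<close> by blast
    ultimately show ?thesis using Suc.IH vanish_mult by blast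
  qed
  have "x \<in> ideal_gen {a * b |a b. a \<in> ideal_pow (ideal_gen S) m \<and> b \<in> ideal_gen S}"
    using Suc.prems by (simp only: ideal_pow.simps ideal_prod_def)
  then show ?case using gen vanish_ideal_gen by blast
qed

lemma vanish_pt:
  assumes "P \<noteq> (0, 0)" "Q \<noteq> (0, 0)" "f \<in> ideal_pow (ideal_gen {lin a0 a1 P, lin b0 b1 Q}) m"
  shows "vanish (pnorm P) (pnorm Q) m f"
proof (rule vanish_ideal_pow[OF _ assms(3)])
  fix s assume "s \<in> {lin a0 a1 P, lin b0 b1 Q}"
  moreover have "TH (pnorm P) (pnorm Q) 0 0 (lin a0 a1 P) = 0"
    unfolding TH_def
    by (rule lin_vanish_at) (use dist assms(1) in \<open>auto simp: dv_def\<close>)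
  moreover have "TH (pnorm P) (pnorm Q) 0 0 (lin b0 b1 Q) = 0"
  proof -
    have "W2 (dv a0 a1 (pnorm P)) (tv (pnorm P)) (dv b0 b1 (pnorm Q)) (tv (pnorm Q)) 0 0
        = W2 (dv b0 b1 (pnorm Q)) (tv (pnorm Q)) (dv a0 a1 (pnorm P)) (tv (pnorm P)) 0 0"
      by (simp add: fun_eq_iff W2_00 mult.commute)
    then show ?thesis unfolding TH_def
      by (simp only:) (rule lin_vanish_at, use dist assms(2) in \<open>auto simp: dv_def\<close>)
  qed
  ultimately show "vanish (pnorm P) (pnorm Q) 1 s" unfolding vanish_def by auto
qed

lemma vars_in: "a0 \<in> {0,1,2,3}" "a1 \<in> {0,1,2,3}" "b0 \<in> {0,1,2,3}" "b1 \<in> {0,1,2,3}"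
  using vars by blast+

lemma lin_inR: "inR (lin a0 a1 P)" "inR (lin b0 b1 Q)"
  unfolding lin_def by (intro inR_diff inR_mult inR_Var inR_Const vars_in)+

lemma lin_pnorm:
  assumes "P \<noteq> (0, 0)"
  shows "\<exists>c. lin v0 v1 (pnorm P) = Const c * lin v0 v1 P"
proof (cases "fst P = 0")
  case True
  then have "snd P \<noteq> 0" using assms by (cases P) auto
  have "lin v0 v1 (pnorm P) = Const (1 / snd P) * lin v0 v1 P"
    using True \<open>snd P \<noteq> 0\<close>
    by (simp add: pnorm_def lin_def Const_def mult_single algebra_simps flip: mult.assoc)
  then show ?thesis by blast
next
  case False
  have "lin v0 v1 (pnorm P) = Const (1 / fst P) * lin v0 v1 P"
    using False
    by (simp add: pnorm_def lin_def Const_def mult_single algebra_simps flip: mult.assoc)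
  then show ?thesis by blast
qed

lemma ideal_pow_pow_mem:
  assumes "x \<in> ideal_pow I n" "y \<in> I"
  shows "y ^ a * x \<in> ideal_pow I (n + a)"
proof (induction a)
  case 0 then show ?case using assms by simp
next
  case (Suc a)
  have "y ^ Suc a * x = (y ^ a * x) * y" by (simp add: mult_ac)
  then show ?case using ideal_pow_Suc_prod[OF Suc assms(2)] by (simp only: add_Suc_right)
qed

lemma pt_pow_mem:
  assumes P: "P \<noteq> (0, 0)" and Q: "Q \<noteq> (0, 0)" and g: "inR g" and h: "inR h" and m: "m \<le> a + b"
  shows "(lin a0 a1 (pnorm P) ^ a * g) * (lin b0 b1 (pnorm Q) ^ b * h)
     \<in> ideal_pow (ideal_gen {lin a0 a1 P, lin b0 b1 Q}) m"
proof -
  let ?I = "ideal_gen {lin a0 a1 P, lin b0 b1 Q}"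
  let ?u = "lin a0 a1 (pnorm P)" and ?v = "lin b0 b1 (pnorm Q)"
  have u: "?u \<in> ?I"
  proof -
    obtain c where "?u = Const c * lin a0 a1 P" using lin_pnorm[OF P] by blast
    then show ?thesis by (simp add: ideal_gen_single)
  qed
  have v: "?v \<in> ?I"
  proof -
    obtain c where "?v = Const c * lin b0 b1 Q" using lin_pnorm[OF Q] by blast
    then show ?thesis by (simp add: ideal_gen_single)
  qed
  have uR: "inR ?u" "inR ?v" by (rule lin_inR)+
  define a' where "a' = min a m"
  define b' where "b' = m - a'"
  have ab: "a' \<le> a" "b' \<le> b" "a' + b' = m" using m unfolding a'_def b'_def by auto
  define r where "r = ?u ^ (a - a') * g * ?v ^ (b - b') * h"
  have rR: "inR r" unfolding r_def using uR g h by (intro inR_mult inR_power)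
  have "(?u ^ a * g) * (?v ^ b * h) = ?u ^ a' * (?v ^ b' * r)"
  proof -
    have "?u ^ a = ?u ^ a' * ?u ^ (a - a')" using ab by (simp flip: power_add)
    moreover have "?v ^ b = ?v ^ b' * ?v ^ (b - b')" using ab by (simp flip: power_add)
    ultimately show ?thesis unfolding r_def by (simp only: mult_ac)
  qed
  moreover have "?v ^ b' * r \<in> ideal_pow ?I (0 + b')"
    by (rule ideal_pow_pow_mem[OF _ v]) (use rR in simp)
  then have "?u ^ a' * (?v ^ b' * r) \<in> ideal_pow ?I (0 + b' + a')"
    by (rule ideal_pow_pow_mem[OF _ u])
  ultimately show ?thesis using ab by (simp add: add.commute)
qed

end



section \<open>Binary forms on one side\<close>

definition form :: "nat \<Rightarrow> nat \<Rightarrow> nat \<Rightarrow> 'k::comm_ring_1 mpoly \<Rightarrow> bool" where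
  "form v0 v1 d f \<longleftrightarrow> (\<forall>\<mu>\<in>Poly_Mapping.keys f. Poly_Mapping.keys \<mu> \<subseteq> {v0, v1} \<and>
      Poly_Mapping.lookup \<mu> v0 + Poly_Mapping.lookup \<mu> v1 = d)"

lemma form_mult:
  assumes f: "form v0 v1 d1 f" and g: "form v0 v1 d2 g"
  shows "form v0 v1 (d1 + d2) (f * g)"
  unfolding form_def
proof
  fix \<mu> assume "\<mu> \<in> Poly_Mapping.keys (f * g)"
  then obtain a b where ab: "\<mu> = a + b" "a \<in> Poly_Mapping.keys f" "b \<in> Poly_Mapping.keys g"
    using keys_mult[of f g] by auto
  have "Poly_Mapping.keys a \<subseteq> {v0, v1}" "Poly_Mapping.keys b \<subseteq> {v0, v1}"
    "Poly_Mapping.lookup a v0 + Poly_Mapping.lookup a v1 = d1"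
    "Poly_Mapping.lookup b v0 + Poly_Mapping.lookup b v1 = d2"
    using f g ab unfolding form_def by auto
  moreover have "Poly_Mapping.keys \<mu> \<subseteq> Poly_Mapping.keys a \<union> Poly_Mapping.keys b"
    using ab(1) Poly_Mapping.keys_add[of a b] by simp
  ultimately show "Poly_Mapping.keys \<mu> \<subseteq> {v0, v1} \<and>
      Poly_Mapping.lookup \<mu> v0 + Poly_Mapping.lookup \<mu> v1 = d1 + d2"
    using ab(1) by (auto simp: lookup_add)
qed

lemma form_one: "form v0 v1 0 1"
  by (simp add: form_def)

lemma form_power: "form v0 v1 d f \<Longrightarrow> form v0 v1 (n * d) (f ^ n)"
proof (induction n)
  case 0 then show ?case by (simp add: form_one)
next
  case (Suc n)
  then have "form v0 v1 (d + n * d) (f * f ^ n)" by (intro form_mult) auto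
  then show ?case by simp
qed

lemma form_prod: "finite I \<Longrightarrow> (\<And>i. i \<in> I \<Longrightarrow> form v0 v1 (d i) (F i)) \<Longrightarrow> form v0 v1 (sum d I) (prod F I)"
proof (induction I rule: finite_induct)
  case empty then show ?case by (simp add: form_one)
next
  case (insert x F)
  then show ?case by (auto intro: form_mult)
qed

lemma form_add: "form v0 v1 d f \<Longrightarrow> form v0 v1 d g \<Longrightarrow> form v0 v1 d (f + g)"
  unfolding form_def using Poly_Mapping.keys_add[of f g] by blast

lemma form_diff: "form v0 v1 d f \<Longrightarrow> form v0 v1 d g \<Longrightarrow> form v0 v1 d (f - g)"
  unfolding form_def using keys_diff[of f g] by blast

lemma Const_mult_Var: "Const c * Var v = Poly_Mapping.single (Poly_Mapping.single v 1) c"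
  by (simp add: Const_def Var_def mult_single)

lemma form_CVar: "v \<in> {v0, v1} \<Longrightarrow> v0 \<noteq> v1 \<Longrightarrow> form v0 v1 1 (Const c * Var v)"
  unfolding Const_mult_Var form_def by (auto simp: lookup_single)

lemma form_Var: "v \<in> {v0, v1} \<Longrightarrow> v0 \<noteq> v1 \<Longrightarrow> form v0 v1 1 (Var v)"
  using form_CVar[of v v0 v1 1] by (simp add: Const_def)

lemma form_lin: "v0 \<noteq> v1 \<Longrightarrow> form v0 v1 1 (lin v0 v1 p)"
  unfolding lin_def by (intro form_diff form_CVar) auto

section \<open>Hasse functionals on one side\<close>

definition Hs :: "nat \<Rightarrow> nat \<Rightarrow> 'k::field \<times> 'k \<Rightarrow> nat \<Rightarrow> 'k mpoly \<Rightarrow> 'k" where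
  "Hs v0 v1 p k = lf (hw (dv v0 v1 p) (tv p) k)"

definition wfm :: "nat \<Rightarrow> nat \<Rightarrow> 'k::field \<times> 'k \<Rightarrow> 'k mpoly" where
  "wfm v0 v1 p = Var (dv v1 v0 p)"

definition nrm :: "'k::field \<times> 'k \<Rightarrow> bool" where
  "nrm p \<longleftrightarrow> p = (0, 1) \<or> fst p = 1"

lemma nrm_pnorm: "nrm (pnorm P)"
  by (simp add: nrm_def pnorm_def)

lemma lf_hw_mult:
  "lf (hw v t k) (f * g) = (\<Sum>k1\<le>k. lf (hw v t k1) f * lf (hw v t (k - k1)) g)"
proof -
  have "lf (hw v t k) (f * g) = (\<Sum>\<mu>\<in>Poly_Mapping.keys f. \<Sum>\<nu>\<in>Poly_Mapping.keys g.
      \<Sum>k1\<le>k. (Poly_Mapping.lookup f \<mu> * hw v t k1 \<mu>) * (Poly_Mapping.lookup g \<nu> * hw v t (k - k1) \<nu>))"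
    by (simp add: lf_mult_expand hw_add sum_distrib_left mult_ac)
  also have "\<dots> = (\<Sum>k1\<le>k. \<Sum>\<mu>\<in>Poly_Mapping.keys f. \<Sum>\<nu>\<in>Poly_Mapping.keys g.
      (Poly_Mapping.lookup f \<mu> * hw v t k1 \<mu>) * (Poly_Mapping.lookup g \<nu> * hw v t (k - k1) \<nu>))"
    by (subst sum.swap, subst (2) sum.swap) simp
  also have "\<dots> = (\<Sum>k1\<le>k. lf (hw v t k1) f * lf (hw v t (k - k1)) g)"
    by (simp add: lf_def sum_product)
  finally show ?thesis .
qed

lemma Hs_mult: "Hs v0 v1 p k (f * g) = (\<Sum>k1\<le>k. Hs v0 v1 p k1 f * Hs v0 v1 p (k - k1) g)"
  unfolding Hs_def by (rule lf_hw_mult)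

lemma Hs0_mult: "Hs v0 v1 p 0 (f * g) = Hs v0 v1 p 0 f * Hs v0 v1 p 0 g"
  using Hs_mult[of v0 v1 p 0 f g] by simp

lemma lf_one: "lf w 1 = w 0"
  using lf_single[of w 0 1] by simp

lemma Hs0_one: "Hs v0 v1 p 0 1 = 1"
  unfolding Hs_def lf_one by (simp add: hw_def)

lemma Hs0_power: "Hs v0 v1 p 0 (f ^ n) = Hs v0 v1 p 0 f ^ n"
  by (induction n) (simp_all add: Hs0_one Hs0_mult)

lemma Hs0_prod: "Hs v0 v1 p 0 (prod F I) = (\<Prod>i\<in>I. Hs v0 v1 p 0 (F i))"
  by (induction I rule: infinite_finite_induct) (simp_all add: Hs0_one Hs0_mult)

lemma Hs_Var: "Hs v0 v1 p k (Var w) =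
   of_nat ((if w = dv v0 v1 p then 1 else 0) choose k) * tv p ^ ((if w = dv v0 v1 p then 1 else 0) - k)"
  unfolding Hs_def lf_Var hw_def by (simp add: lookup_single)

lemma Hs_Const_mult: "Hs v0 v1 p k (Const c * f) = c * Hs v0 v1 p k f"
  unfolding Hs_def by (rule lf_Const_mult)

lemma Hs_diff: "Hs v0 v1 p k (f - g) = Hs v0 v1 p k f - Hs v0 v1 p k g"
  unfolding Hs_def by (rule lf_diff)

context
  fixes v0 v1 :: nat
  assumes v01: "v0 \<noteq> v1"
begin

lemma Hs_lin_0: "nrm p \<Longrightarrow> Hs v0 v1 p 0 (lin v0 v1 p) = 0"
  using v01 by (auto simp: nrm_def lin_def Hs_diff Hs_Const_mult Hs_Var dv_def tv_def)

lemma Hs_lin_1: "nrm p \<Longrightarrow> Hs v0 v1 p 1 (lin v0 v1 p) \<noteq> 0"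
  using v01 by (auto simp: nrm_def lin_def Hs_diff Hs_Const_mult Hs_Var dv_def tv_def)

lemma Hs_wfm: "Hs v0 v1 p 0 (wfm v0 v1 p) = 1"
  using v01 by (auto simp: wfm_def Hs_Var dv_def tv_def)

lemma Hs_lin_other: "nrm p \<Longrightarrow> nrm q \<Longrightarrow> p \<noteq> q \<Longrightarrow> Hs v0 v1 p 0 (lin v0 v1 q) \<noteq> 0"
  using v01 by (cases p; cases q) (auto simp: nrm_def lin_def Hs_diff Hs_Const_mult Hs_Var dv_def tv_def)

lemma Hs_lin_pow_low:
  assumes "nrm p"
  shows "k < e \<Longrightarrow> Hs v0 v1 p k (lin v0 v1 p ^ e * g) = 0"
proof (induction e arbitrary: k)
  case 0 then show ?case by simp
next
  case (Suc e)
  have "Hs v0 v1 p k (lin v0 v1 p ^ Suc e * g) = Hs v0 v1 p k (lin v0 v1 p * (lin v0 v1 p ^ e * g))"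
    by (simp add: mult_ac)
  also have "\<dots> = (\<Sum>k1\<le>k. Hs v0 v1 p k1 (lin v0 v1 p) * Hs v0 v1 p (k - k1) (lin v0 v1 p ^ e * g))"
    by (rule Hs_mult)
  also have "\<dots> = 0"
  proof (intro sum.neutral ballI)
    fix k1 assume k1: "k1 \<in> {..k}"
    show "Hs v0 v1 p k1 (lin v0 v1 p) * Hs v0 v1 p (k - k1) (lin v0 v1 p ^ e * g) = 0"
    proof (cases "k1 = 0")
      case True then show ?thesis using Hs_lin_0[OF assms] by simp
    next
      case False
      then have "k - k1 < e" using Suc.prems k1 by auto
      then show ?thesis using Suc.IH by simp
    qed
  qed
  finally show ?case .
qed

lemma Hs_lin_pow_diag:
  assumes "nrm p"
  shows "Hs v0 v1 p e (lin v0 v1 p ^ e * g) = Hs v0 v1 p 1 (lin v0 v1 p) ^ e * Hs v0 v1 p 0 g"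
proof (induction e)
  case 0 then show ?case by simp
next
  case (Suc e)
  have "Hs v0 v1 p (Suc e) (lin v0 v1 p ^ Suc e * g) = Hs v0 v1 p (Suc e) (lin v0 v1 p * (lin v0 v1 p ^ e * g))"
    by (simp add: mult_ac)
  also have "\<dots> = (\<Sum>k1\<le>Suc e. Hs v0 v1 p k1 (lin v0 v1 p) * Hs v0 v1 p (Suc e - k1) (lin v0 v1 p ^ e * g))"
    by (rule Hs_mult)
  also have "\<dots> = (\<Sum>k1\<in>{1}. Hs v0 v1 p k1 (lin v0 v1 p) * Hs v0 v1 p (Suc e - k1) (lin v0 v1 p ^ e * g))"
  proof (rule sum.mono_neutral_right)
    show "\<forall>k1\<in>{..Suc e} - {1}. Hs v0 v1 p k1 (lin v0 v1 p) * Hs v0 v1 p (Suc e - k1) (lin v0 v1 p ^ e * g) = 0"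
    proof
      fix k1 assume k1: "k1 \<in> {..Suc e} - {1}"
      show "Hs v0 v1 p k1 (lin v0 v1 p) * Hs v0 v1 p (Suc e - k1) (lin v0 v1 p ^ e * g) = 0"
      proof (cases "k1 = 0")
        case True then show ?thesis using Hs_lin_0[OF assms] by simp
      next
        case False
        then have "Suc e - k1 < e" using k1 by auto
        then show ?thesis using Hs_lin_pow_low[OF assms] by simp
      qed
    qed
  qed auto
  also have "\<dots> = Hs v0 v1 p 1 (lin v0 v1 p) ^ Suc e * Hs v0 v1 p 0 g"
    using Suc.IH by simp
  finally show ?case .
qed

lemma test_form_aux:
  assumes "finite I"
  shows "form v0 v1 (\<Sum>s'\<in>I. e s') (\<Prod>s'\<in>I. lin v0 v1 (ps ! s') ^ e s')"
proof -
  have "form v0 v1 (\<Sum>s'\<in>I. e s' * 1) (\<Prod>s'\<in>I. lin v0 v1 (ps ! s') ^ e s')"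
    by (rule form_prod[OF assms]) (intro form_power form_lin v01)
  then show ?thesis by simp
qed

end

definition test :: "nat \<Rightarrow> nat \<Rightarrow> ('k::field \<times> 'k) list \<Rightarrow> (nat \<Rightarrow> nat) \<Rightarrow> nat \<Rightarrow> nat \<Rightarrow> nat \<Rightarrow> 'k mpoly" where
  "test v0 v1 ps e d s b = lin v0 v1 (ps ! s) ^ b *
     ((\<Prod>s'\<in>{..<length ps} - {s}. lin v0 v1 (ps ! s') ^ e s') *
      wfm v0 v1 (ps ! s) ^ (d - b - (\<Sum>s'\<in>{..<length ps} - {s}. e s')))"

context
  fixes v0 v1 :: nat
  assumes v01: "v0 \<noteq> v1"
begin

lemma test_form:
  assumes s: "s < length ps" and b: "b < e s" and sum: "(\<Sum>s'<length ps. e s') \<le> d + 1"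
  shows "form v0 v1 d (test v0 v1 ps e d s b)"
proof -
  let ?S = "(\<Sum>s'\<in>{..<length ps} - {s}. e s')"
  have "(\<Sum>s'<length ps. e s') = e s + ?S"
    using s by (simp add: sum.remove)
  then have deg: "b + (?S + (d - b - ?S)) = d" using b sum by linarith
  have "form v0 v1 (b * 1 + (?S + (d - b - ?S) * 1)) (test v0 v1 ps e d s b)"
    unfolding test_def
    using form_Var[OF _ v01, of v0] form_Var[OF _ v01, of v1]
    by (intro form_mult form_power form_lin v01 test_form_aux[OF v01]) (auto simp: wfm_def dv_def)
  then show ?thesis using deg by simp
qed

lemma test_zero:
  assumes s: "s < length ps" and s': "s' < length ps" and b': "b' < e s'"
    and ne: "s \<noteq> s' \<or> b' < b" and nrm: "nrm (ps ! s')"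
  shows "Hs v0 v1 (ps ! s') b' (test v0 v1 ps e d s b) = 0"
proof (cases "s = s'")
  case True
  then have "b' < b" using ne by simp
  then show ?thesis unfolding test_def using True Hs_lin_pow_low[OF v01 nrm] by simp
next
  case False
  have "(\<Prod>s''\<in>{..<length ps} - {s}. lin v0 v1 (ps ! s'') ^ e s'')
      = lin v0 v1 (ps ! s') ^ e s' * (\<Prod>s''\<in>{..<length ps} - {s} - {s'}. lin v0 v1 (ps ! s'') ^ e s'')"
    using False s' by (intro prod.remove) auto
  then have "test v0 v1 ps e d s b = lin v0 v1 (ps ! s') ^ e s' *
     (lin v0 v1 (ps ! s) ^ b * (\<Prod>s''\<in>{..<length ps} - {s} - {s'}. lin v0 v1 (ps ! s'') ^ e s'') *
       wfm v0 v1 (ps ! s) ^ (d - b - (\<Sum>s'\<in>{..<length ps} - {s}. e s')))"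
    unfolding test_def by (simp only: mult_ac)
  then show ?thesis using Hs_lin_pow_low[OF v01 nrm b'] by simp
qed

lemma test_diag:
  assumes s: "s < length ps" and dist: "distinct ps" and nrm: "\<And>p. p \<in> set ps \<Longrightarrow> nrm p"
  shows "Hs v0 v1 (ps ! s) b (test v0 v1 ps e d s b) \<noteq> 0"
proof -
  have ns: "nrm (ps ! s)" using nrm s by simp
  have "Hs v0 v1 (ps ! s) b (test v0 v1 ps e d s b) =
    Hs v0 v1 (ps ! s) 1 (lin v0 v1 (ps ! s)) ^ b *
    Hs v0 v1 (ps ! s) 0 ((\<Prod>s'\<in>{..<length ps} - {s}. lin v0 v1 (ps ! s') ^ e s') *
      wfm v0 v1 (ps ! s) ^ (d - b - (\<Sum>s'\<in>{..<length ps} - {s}. e s')))"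
    unfolding test_def by (rule Hs_lin_pow_diag[OF v01 ns])
  also have "\<dots> = Hs v0 v1 (ps ! s) 1 (lin v0 v1 (ps ! s)) ^ b *
    (\<Prod>s'\<in>{..<length ps} - {s}. Hs v0 v1 (ps ! s) 0 (lin v0 v1 (ps ! s')) ^ e s')"
    by (simp add: Hs0_mult Hs0_prod Hs0_power Hs_wfm[OF v01])
  also have "\<dots> \<noteq> 0"
  proof -
    have "Hs v0 v1 (ps ! s) 0 (lin v0 v1 (ps ! s')) \<noteq> 0" if "s' \<in> {..<length ps} - {s}" for s'
    proof (rule Hs_lin_other[OF v01 ns])
      show "nrm (ps ! s')" using that nrm by auto
      show "ps ! s \<noteq> ps ! s'" using that s dist by (auto simp: nth_eq_iff_index_eq)
    qed
    then show ?thesis using Hs_lin_1[OF v01 ns] by auto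
  qed
  finally show ?thesis .
qed

end



section \<open>Linear algebra\<close>

lemma Const_add: "Const (a + b) = Const a + Const b"
  by (simp add: Const_def single_add)

lemma Const_mult: "Const (a * b) = Const a * Const b"
  by (simp add: Const_def mult_single)

lemma Const_one: "Const 1 = 1"
  by (simp add: Const_def)

interpretation VS: vector_space "scal :: 'k::field \<Rightarrow> 'k mpoly \<Rightarrow> 'k mpoly"
  by unfold_locales (simp_all add: scal_def Const_add Const_mult Const_one algebra_simps)

lemma lf_scal: "lf w (scal c f) = c * lf w f"
  by (simp add: scal_def lf_Const_mult)

lemma tri_dims:
  fixes E :: "'i::linorder \<Rightarrow> 'k::field mpoly" and Lam :: "'i \<Rightarrow> 'k mpoly \<Rightarrow> 'k"
  assumes J: "finite J"
  and EV: "\<And>p. p \<in> J \<Longrightarrow> E p \<in> V"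
  and VB: "V \<subseteq> VS.span B" and B: "finite B" "card B \<le> card J"
  and lin_add: "\<And>p f g. p \<in> J \<Longrightarrow> Lam p (f + g) = Lam p f + Lam p g"
  and lin_scal: "\<And>p c f. p \<in> J \<Longrightarrow> Lam p (scal c f) = c * Lam p f"
  and tri: "\<And>p q. p \<in> J \<Longrightarrow> q \<in> J \<Longrightarrow> p < q \<Longrightarrow> Lam p (E q) = 0"
  and diag: "\<And>p. p \<in> J \<Longrightarrow> Lam p (E p) \<noteq> 0"
  and L: "L \<subseteq> J" and UV: "U \<subseteq> V" and EU: "\<And>q. q \<in> L \<Longrightarrow> E q \<in> U"
  and LU: "\<And>p f. p \<in> J - L \<Longrightarrow> f \<in> U \<Longrightarrow> Lam p f = 0"
  shows "VS.dim V = card J \<and> VS.dim U = card L"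
proof -
  have lin_zero: "Lam p 0 = 0" if "p \<in> J" for p
    using lin_scal[OF that, of 0 0] by (simp add: scal_def Const_def)
  have lin_sum: "Lam p (\<Sum>v\<in>S. scal (u v) v) = (\<Sum>v\<in>S. u v * Lam p v)" if "p \<in> J" "finite S" for p S u
    using that(2) by (induction S rule: finite_induct) (simp_all add: lin_zero[OF that(1)] lin_add[OF that(1)] lin_scal[OF that(1)])
  have inj: "inj_on E J"
  proof (rule inj_onI)
    fix p q assume pq: "p \<in> J" "q \<in> J" "E p = E q"
    show "p = q"
    proof (rule ccontr)
      assume "p \<noteq> q"
      then have "p < q \<or> q < p" by auto
      then show False using tri diag pq by metis
    qed
  qed
  have claim: "VS.independent (X \<union> E ` J') \<and> X \<inter> E ` J' = {}"
    if J': "J' \<subseteq> J" and XL: "\<And>p f. p \<in> J' \<Longrightarrow> f \<in> X \<Longrightarrow> Lam p f = 0" and X: "VS.independent X" for X J'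
  proof
    show "X \<inter> E ` J' = {}"
    proof (rule ccontr)
      assume "X \<inter> E ` J' \<noteq> {}"
      then obtain p where "p \<in> J'" "E p \<in> X" by auto
      then show False using XL diag J' by blast
    qed
    show "VS.independent (X \<union> E ` J')"
      unfolding VS.independent_explicit_finite_subsets
    proof (intro allI impI ballI)
      fix S u v assume S: "S \<subseteq> X \<union> E ` J'" "finite S" and sum0: "(\<Sum>v\<in>S. scal (u v) v) = 0" and v: "v \<in> S"
      have Epart: "u (E p) = 0" if "p \<in> J'" "E p \<in> S" for p
      proof (rule ccontr)
        assume "u (E p) \<noteq> 0"
        define T where "T = {p \<in> J'. E p \<in> S \<and> u (E p) \<noteq> 0}"
        have "finite T" unfolding T_def using finite_subset[OF J' J] by simp
        moreover have "T \<noteq> {}" using that \<open>u (E p) \<noteq> 0\<close> unfolding T_def by auto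
        ultimately have pm: "Min T \<in> T" and pmin: "\<And>q. q \<in> T \<Longrightarrow> Min T \<le> q" by auto
        define p0 where "p0 = Min T"
        have p0: "p0 \<in> J'" "E p0 \<in> S" "u (E p0) \<noteq> 0" using pm unfolding T_def p0_def by auto
        have p0J: "p0 \<in> J" using p0 J' by auto
        have "0 = Lam p0 (\<Sum>v\<in>S. scal (u v) v)" using sum0 lin_zero[OF p0J] by simp
        also have "\<dots> = (\<Sum>v\<in>S. u v * Lam p0 v)" by (rule lin_sum[OF p0J S(2)])
        also have "\<dots> = u (E p0) * Lam p0 (E p0) + (\<Sum>v\<in>S - {E p0}. u v * Lam p0 v)"
          using p0(2) S(2) by (simp add: sum.remove)
        also have "(\<Sum>v\<in>S - {E p0}. u v * Lam p0 v) = 0"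
        proof (intro sum.neutral ballI)
          fix w assume w: "w \<in> S - {E p0}"
          show "u w * Lam p0 w = 0"
          proof (cases "u w = 0")
            case False
            show ?thesis
            proof (cases "w \<in> X")
              case True then show ?thesis using XL[OF p0(1)] by simp
            next
              case False
              then obtain q where q: "q \<in> J'" "w = E q" using w S(1) by auto
              then have "q \<in> T" using w \<open>u w \<noteq> 0\<close> unfolding T_def by auto
              then have "p0 \<le> q" using pmin p0_def by auto
              moreover have "q \<noteq> p0" using q w by auto
              ultimately have "p0 < q" by auto
              then show ?thesis using tri[OF p0J _ \<open>p0 < q\<close>] q J' by auto
            qed
          qed simp
        qed
        finally have "u (E p0) * Lam p0 (E p0) = 0" by simp
        then show False using p0(3) diag[OF p0J] by simp
      qed
      have "(\<Sum>v\<in>S \<inter> X. scal (u v) v) = (\<Sum>v\<in>S. scal (u v) v)"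
      proof (rule sum.mono_neutral_left)
        show "\<forall>i\<in>S - S \<inter> X. scal (u i) i = 0"
        proof
          fix w assume w: "w \<in> S - S \<inter> X"
          then obtain q where "q \<in> J'" "w = E q" using S(1) by auto
          then have "u w = 0" using Epart w by auto
          then show "scal (u w) w = 0" by (simp add: scal_def Const_def)
        qed
      qed (use S in auto)
      then have sumX: "(\<Sum>v\<in>S \<inter> X. scal (u v) v) = 0" using sum0 by simp
      show "u v = 0"
      proof (cases "v \<in> X")
        case True
        then show ?thesis
          using X[unfolded VS.independent_explicit_finite_subsets, rule_format, of "S \<inter> X" u] sumX S(2) v
          by auto
      next
        case False
        then obtain q where "q \<in> J'" "v = E q" using v S(1) by auto
        then show ?thesis using Epart v by auto
      qed
    qed
  qed
  obtain BV where BV: "BV \<subseteq> V" "VS.independent BV" "V \<subseteq> VS.span BV" "card BV = VS.dim V"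
    using VS.basis_exists by blast
  have BVfin: "finite BV \<and> card BV \<le> card B"
    using VS.independent_span_bound[OF B(1) BV(2)] BV(1) VB by auto
  have EJ: "VS.independent (E ` J)"
    using claim[of J "{}"] VS.independent_empty by auto
  have "card (E ` J) \<le> card BV"
    using VS.independent_span_bound[OF _ EJ] BVfin BV(3) EV by blast
  then have dimV: "VS.dim V = card J"
    using card_image[OF inj] BV(4) BVfin B(2) by linarith
  obtain BU where BU: "BU \<subseteq> U" "VS.independent BU" "U \<subseteq> VS.span BU" "card BU = VS.dim U"
    using VS.basis_exists by blast
  have BUfin: "finite BU"
    using VS.independent_span_bound[OF B(1) BU(2)] BU(1) UV VB by auto
  have EL: "VS.independent (E ` L)"
    using VS.independent_mono[OF EJ] L by (simp add: image_mono)
  have "card (E ` L) \<le> card BU"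
    using VS.independent_span_bound[OF BUfin EL] BU(3) EU by blast
  moreover have "card (E ` L) = card L" using card_image[OF inj_on_subset[OF inj L]] .
  ultimately have ge: "card L \<le> VS.dim U" using BU(4) by simp
  have cl: "VS.independent (BU \<union> E ` (J - L)) \<and> BU \<inter> E ` (J - L) = {}"
    by (rule claim) (use LU BU in auto)
  have "BU \<union> E ` (J - L) \<subseteq> VS.span BV" using BU(1) UV BV(3) EV by blast
  then have "card (BU \<union> E ` (J - L)) \<le> card BV"
    using VS.independent_span_bound[OF _ cl[THEN conjunct1]] BVfin by blast
  moreover have "card (BU \<union> E ` (J - L)) = card BU + card (J - L)"
    using cl BUfin J card_image[OF inj_on_subset[OF inj, of "J - L"]] by (simp add: card_Un_disjoint)
  moreover have "card (J - L) = card J - card L" using L J by (simp add: card_Diff_subset finite_subset)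
  moreover have "card L \<le> card J" using L J by (simp add: card_mono)
  ultimately have "VS.dim U \<le> card L" using BU(4) BV(4) dimV by linarith
  with ge dimV show ?thesis by simp
qed



lemma alg_closed_infinite: "infinite (UNIV :: 'k::alg_closed_field set)"
proof
  assume fin: "finite (UNIV :: 'k set)"
  define p :: "'k poly" where "p = (\<Prod>a\<in>UNIV. [:-a, 1:]) + 1"
  have dprod: "degree (\<Prod>a\<in>(UNIV :: 'k set). [:-a, 1:]) = card (UNIV :: 'k set)"
    by (subst degree_prod_eq_sum_degree) auto
  have "card (UNIV :: 'k set) > 0" using fin by (simp add: card_gt_0_iff)
  then have "degree p = card (UNIV :: 'k set)"
    unfolding p_def using dprod by (subst degree_add_eq_left) auto
  then have "degree p > 0" using fin by (simp add: card_gt_0_iff)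
  then obtain x where "poly p x = 0" using alg_closed_imp_poly_has_root by blast
  moreover have "poly (\<Prod>a\<in>(UNIV :: 'k set). [:-a, 1:]) x = 0"
  proof -
    have "poly (\<Prod>a\<in>(UNIV :: 'k set). [:-a, 1:]) x = (\<Prod>a\<in>UNIV. poly [:-a, 1:] x)" by (rule poly_prod)
    also have "\<dots> = 0" using fin by (intro prod_zero) (auto intro!: bexI[of _ x])
    finally show ?thesis .
  qed
  ultimately show False by (simp add: p_def)
qed

lemma extra_point:
  assumes "finite (S :: ('k::alg_closed_field \<times> 'k) set)"
  shows "\<exists>p. nrm p \<and> p \<notin> S"
proof -
  have "finite (snd ` S)" using assms by simp
  then obtain t where "t \<notin> snd ` S" using ex_new_if_finite[OF alg_closed_infinite] by blast
  then have "(1, t) \<notin> S" by force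
  then show ?thesis by (intro exI[of _ "(1, t)"]) (simp add: nrm_def)
qed

lemma trunc_exists:
  "\<exists>e'. (\<forall>s<n. e' s \<le> e s) \<and> (\<Sum>s<n. e' s) = min (\<Sum>s<n. e s) (B::nat)" for n :: nat and e :: "nat \<Rightarrow> nat"
proof (induction n)
  case 0 then show ?case by auto
next
  case (Suc n)
  then obtain e'' where e'': "\<forall>s<n. e'' s \<le> e s" "(\<Sum>s<n. e'' s) = min (\<Sum>s<n. e s) B" by blast
  define x where "x = min (e n) (B - (\<Sum>s<n. e s))"
  define e' where "e' = e''(n := x)"
  have "(\<Sum>s<n. e' s) = (\<Sum>s<n. e'' s)" unfolding e'_def by (intro sum.cong) auto
  then have "(\<Sum>s<Suc n. e' s) = min (\<Sum>s<n. e s) B + x" using e'' by (simp add: e'_def)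
  also have "\<dots> = min (\<Sum>s<Suc n. e s) B" unfolding x_def by auto
  finally have "(\<Sum>s<Suc n. e' s) = min (\<Sum>s<Suc n. e s) B" .
  moreover have "\<forall>s<Suc n. e' s \<le> e s" using e'' unfolding e'_def x_def by (auto simp: less_Suc_eq)
  ultimately show ?case by blast
qed

lemma sum_eq_pointwise:
  fixes e e' :: "nat \<Rightarrow> nat"
  assumes le: "\<forall>s<n. e' s \<le> e s" and eq: "(\<Sum>s<n. e' s) = (\<Sum>s<n. e s)" and s: "s < n"
  shows "e' s = e s"
proof (rule ccontr)
  assume "e' s \<noteq> e s"
  then have "e' s < e s" using le s by (simp add: order_less_le)
  then have "(\<Sum>s<n. e' s) < (\<Sum>s<n. e s)"
    using le s by (intro sum_strict_mono_ex1) auto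
  then show False using eq by simp
qed

lemma filter_distinct_key:
  assumes "distinct (map f xs)" "x \<in> set xs"
  shows "filter (\<lambda>y. f y = f x) xs = [x]"
  using assms
proof (induction xs)
  case Nil then show ?case by simp
next
  case (Cons a xs)
  show ?case
  proof (cases "a = x")
    case True
    have "\<forall>y\<in>set xs. f y \<noteq> f x" using Cons.prems True by (auto simp: image_iff)
    then have "filter (\<lambda>y. f y = f x) xs = []" by (auto simp: filter_empty_conv)
    then show ?thesis using True by simp
  next
    case False
    then have "x \<in> set xs" using Cons.prems by simp
    then have "f a \<noteq> f x" using Cons.prems by auto
    then show ?thesis using Cons by auto
  qed
qed

lemma mult_entry:
  assumes "fat_point_scheme Z" "(P, Q, m) \<in> set Z"
  shows "mult Z (pnorm P) (pnorm Q) = m"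
proof -
  let ?f = "\<lambda>(P, Q, m). (pnorm P, pnorm Q)"
  have d: "distinct (map ?f Z)" using assms(1) by (simp add: fat_point_scheme_def)
  have "filter (\<lambda>(P', Q', m). pnorm P' = pnorm P \<and> pnorm Q' = pnorm Q) Z = filter (\<lambda>y. ?f y = ?f (P, Q, m)) Z"
    by (intro filter_cong) auto
  also have "\<dots> = [(P, Q, m)]" by (rule filter_distinct_key[OF d assms(2)])
  finally show ?thesis by (simp add: mult_def)
qed

lemma mult_pos_entry:
  assumes "fat_point_scheme Z" "mult Z R Q > 0"
  shows "\<exists>P Q' m. (P, Q', m) \<in> set Z \<and> pnorm P = R \<and> pnorm Q' = Q \<and> m = mult Z R Q"
proof -
  have "filter (\<lambda>(P', Q', m). pnorm P' = R \<and> pnorm Q' = Q) Z \<noteq> []"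
    using assms(2) by (auto simp: mult_def)
  then obtain P Q' m where "(P, Q', m) \<in> set Z" "pnorm P = R" "pnorm Q' = Q"
    by (auto simp: filter_empty_conv)
  then show ?thesis using mult_entry[OF assms(1)] by metis
qed

lemma fps_entry:
  assumes "fat_point_scheme Z" "(P, Q, m) \<in> set Z"
  shows "P \<noteq> (0, 0)" "Q \<noteq> (0, 0)" "m > 0"
  using assms by (auto simp: fat_point_scheme_def)

lemma sum_filter_ge:
  "(\<Sum>k=1..n. size (filter_mset (\<lambda>a. k \<le> a) A)) = (\<Sum>a\<in>#A. min a n)"
proof (induction A)
  case empty then show ?case by simp
next
  case (add x A)
  have e: "\<And>k. size (filter_mset (\<lambda>a. k \<le> a) (add_mset x A)) = size (filter_mset (\<lambda>a. k \<le> a) A) + (if k \<le> x then 1 else 0)"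
    by simp
  have "(\<Sum>k=1..n. size (filter_mset (\<lambda>a. k \<le> a) (add_mset x A)))
      = (\<Sum>k=1..n. size (filter_mset (\<lambda>a. k \<le> a) A)) + (\<Sum>k=1..n. if k \<le> x then 1 else 0)"
    by (simp only: e sum.distrib)
  also have "(\<Sum>k=1..n. if k \<le> (x::nat) then 1 else 0) = card ({1..n} \<inter> {k. k \<le> x})"
    by (simp add: sum.If_cases)
  also have "{1..n} \<inter> {k. k \<le> x} = {1..min n x}" by auto
  finally show ?case using add by (simp add: min.commute)
qed


context sides
begin

definition Vg :: "nat \<Rightarrow> nat \<Rightarrow> 'k::field mpoly set" where
  "Vg dA dB = {f. inR f \<and> (\<forall>\<mu>\<in>Poly_Mapping.keys f.
      Poly_Mapping.lookup \<mu> a0 + Poly_Mapping.lookup \<mu> a1 = dA \<and>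
      Poly_Mapping.lookup \<mu> b0 + Poly_Mapping.lookup \<mu> b1 = dB)}"

definition IZg :: "'k::field fatpts \<Rightarrow> 'k mpoly set" where
  "IZg Z = {p. inR p} \<inter> (\<Inter>(P, Q, m)\<in>set Z. ideal_pow (ideal_gen {lin a0 a1 P, lin b0 b1 Q}) m)"

lemma keys_form_A:
  assumes "form a0 a1 dA e" "\<mu> \<in> Poly_Mapping.keys e" "v \<in> {b0, b1}"
  shows "Poly_Mapping.lookup \<mu> v = 0"
proof -
  have "v \<notin> {a0, a1}" using dist assms(3) by auto
  moreover have "Poly_Mapping.keys \<mu> \<subseteq> {a0, a1}" using assms(1,2) unfolding form_def by auto
  ultimately have "v \<notin> Poly_Mapping.keys \<mu>" by blast
  then show ?thesis by (simp add: in_keys_iff)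
qed

lemma keys_form_B:
  assumes "form b0 b1 dB e" "\<mu> \<in> Poly_Mapping.keys e" "v \<in> {a0, a1}"
  shows "Poly_Mapping.lookup \<mu> v = 0"
proof -
  have "v \<notin> {b0, b1}" using dist assms(3) by auto
  moreover have "Poly_Mapping.keys \<mu> \<subseteq> {b0, b1}" using assms(1,2) unfolding form_def by auto
  ultimately have "v \<notin> Poly_Mapping.keys \<mu>" by blast
  then show ?thesis by (simp add: in_keys_iff)
qed

lemma form_inR:
  assumes "v0 \<in> {0,1,2,3}" "v1 \<in> {0,1,2,3}" "form v0 v1 d e"
  shows "inR e"
  unfolding inR_def
proof
  fix \<mu> assume "\<mu> \<in> Poly_Mapping.keys e"
  then have "Poly_Mapping.keys \<mu> \<subseteq> {v0, v1}" using assms(3) unfolding form_def by auto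
  then show "Poly_Mapping.keys \<mu> \<subseteq> {0, 1, 2, 3}" using assms(1,2) by blast
qed

lemma TH_split:
  assumes e: "form a0 a1 dA e" and g: "form b0 b1 dB g"
  shows "TH p q k b (e * g) = Hs a0 a1 p k e * Hs b0 b1 q b g"
proof -
  let ?va = "dv a0 a1 p" and ?vb = "dv b0 b1 q"
  have va: "?va \<in> {a0, a1}" and vb: "?vb \<in> {b0, b1}" by (auto simp: dv_def)
  have "TH p q k b (e * g) = (\<Sum>\<mu>\<in>Poly_Mapping.keys e. \<Sum>\<nu>\<in>Poly_Mapping.keys g.
      (Poly_Mapping.lookup e \<mu> * hw ?va (tv p) k \<mu>) * (Poly_Mapping.lookup g \<nu> * hw ?vb (tv q) b \<nu>))"
    unfolding TH_def lf_mult_expand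
  proof (intro sum.cong refl)
    fix \<mu> \<nu> assume \<mu>: "\<mu> \<in> Poly_Mapping.keys e" and \<nu>: "\<nu> \<in> Poly_Mapping.keys g"
    have "Poly_Mapping.lookup \<nu> ?va = 0" using keys_form_B[OF g \<nu> va] .
    moreover have "Poly_Mapping.lookup \<mu> ?vb = 0" using keys_form_A[OF e \<mu> vb] .
    ultimately show "Poly_Mapping.lookup e \<mu> * Poly_Mapping.lookup g \<nu> * W2 ?va (tv p) ?vb (tv q) k b (\<mu> + \<nu>) =
      Poly_Mapping.lookup e \<mu> * hw ?va (tv p) k \<mu> * (Poly_Mapping.lookup g \<nu> * hw ?vb (tv q) b \<nu>)"
      by (simp add: W2_def hw_def lookup_add mult_ac)
  qed
  also have "\<dots> = Hs a0 a1 p k e * Hs b0 b1 q b g"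
    by (simp add: Hs_def lf_def sum_product)
  finally show ?thesis .
qed

lemma prod_in_V:
  assumes e: "form a0 a1 dA e" and g: "form b0 b1 dB g"
  shows "e * g \<in> Vg dA dB"
  unfolding Vg_def
proof (intro CollectI conjI ballI)
  show "inR (e * g)"
  proof -
    have "inR e" "inR g" using form_inR[OF vars_in(1,2) e] form_inR[OF vars_in(3,4) g] by auto
    then show ?thesis by (rule inR_mult)
  qed
  fix \<mu> assume "\<mu> \<in> Poly_Mapping.keys (e * g)"
  then obtain x y where xy: "\<mu> = x + y" "x \<in> Poly_Mapping.keys e" "y \<in> Poly_Mapping.keys g"
    using keys_mult[of e g] by auto
  have "Poly_Mapping.lookup y a0 = 0" "Poly_Mapping.lookup y a1 = 0"
    "Poly_Mapping.lookup x b0 = 0" "Poly_Mapping.lookup x b1 = 0"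
    using keys_form_B[OF g xy(3)] keys_form_A[OF e xy(2)] by auto
  moreover have "Poly_Mapping.lookup x a0 + Poly_Mapping.lookup x a1 = dA"
    "Poly_Mapping.lookup y b0 + Poly_Mapping.lookup y b1 = dB"
    using e g xy unfolding form_def by auto
  ultimately show "Poly_Mapping.lookup \<mu> a0 + Poly_Mapping.lookup \<mu> a1 = dA"
    "Poly_Mapping.lookup \<mu> b0 + Poly_Mapping.lookup \<mu> b1 = dB"
    using xy(1) by (simp_all add: lookup_add)
qed

end

lemma test_factor:
  assumes v: "v0 \<in> {0,1,2,3}" "v1 \<in> {0,1,2,3}" and s': "s' < length ps"
  shows "\<exists>g. inR g \<and> test v0 v1 ps e d s b = lin v0 v1 (ps ! s') ^ (if s' = s then b else e s') * g"
proof -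
  have linR: "inR (lin v0 v1 p)" for p unfolding lin_def using v by (intro inR_diff inR_mult inR_Var inR_Const)
  have wR: "inR (wfm v0 v1 p)" for p unfolding wfm_def dv_def using v by (auto intro: inR_Var)
  show ?thesis
  proof (cases "s' = s")
    case True
    let ?g = "(\<Prod>s'\<in>{..<length ps} - {s}. lin v0 v1 (ps ! s') ^ e s') *
         wfm v0 v1 (ps ! s) ^ (d - b - (\<Sum>s'\<in>{..<length ps} - {s}. e s'))"
    have "inR ?g" by (intro inR_mult inR_prod inR_power linR wR)
    moreover have "test v0 v1 ps e d s b = lin v0 v1 (ps ! s') ^ (if s' = s then b else e s') * ?g"
      using True by (simp add: test_def)
    ultimately show ?thesis by blast
  next
    case False
    have "(\<Prod>s''\<in>{..<length ps} - {s}. lin v0 v1 (ps ! s'') ^ e s'')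
      = lin v0 v1 (ps ! s') ^ e s' * (\<Prod>s''\<in>{..<length ps} - {s} - {s'}. lin v0 v1 (ps ! s'') ^ e s'')"
      using False s' by (intro prod.remove) auto
    then have "test v0 v1 ps e d s b = lin v0 v1 (ps ! s') ^ e s' *
     (lin v0 v1 (ps ! s) ^ b * (\<Prod>s''\<in>{..<length ps} - {s} - {s'}. lin v0 v1 (ps ! s'') ^ e s'') *
       wfm v0 v1 (ps ! s) ^ (d - b - (\<Sum>s'\<in>{..<length ps} - {s}. e s')))"
      unfolding test_def by (simp only: mult_ac)
    moreover have "inR (lin v0 v1 (ps ! s) ^ b * (\<Prod>s''\<in>{..<length ps} - {s} - {s'}. lin v0 v1 (ps ! s'') ^ e s'') *
       wfm v0 v1 (ps ! s) ^ (d - b - (\<Sum>s'\<in>{..<length ps} - {s}. e s')))"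
      using linR wR by (intro inR_mult inR_prod inR_power)
    ultimately show ?thesis using False by auto
  qed
qed


context sides
begin

definition mono :: "nat \<Rightarrow> nat \<Rightarrow> nat \<Rightarrow> nat \<Rightarrow> (nat \<Rightarrow>\<^sub>0 nat)" where
  "mono dA dB c e = Poly_Mapping.single a0 c + Poly_Mapping.single a1 (dA - c) +
     Poly_Mapping.single b0 e + Poly_Mapping.single b1 (dB - e)"

lemma V_span:
  "\<exists>B. finite B \<and> card B \<le> (dA + 1) * (dB + 1) \<and> Vg dA dB \<subseteq> VS.span (B :: 'k::field mpoly set)"
proof -
  define B :: "'k mpoly set" where "B = (\<lambda>(c, e). Poly_Mapping.single (mono dA dB c e) 1) ` ({..dA} \<times> {..dB})"
  have fin: "finite B" unfolding B_def by simp
  have card: "card B \<le> (dA + 1) * (dB + 1)"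
    unfolding B_def using card_image_le[of "{..dA} \<times> {..dB}"] by (simp add: card_cartesian_product)
  have "f \<in> VS.span B" if f: "f \<in> Vg dA dB" for f
  proof -
    have "f = (\<Sum>\<mu>\<in>Poly_Mapping.keys f. scal (Poly_Mapping.lookup f \<mu>) (Poly_Mapping.single \<mu> 1))"
      by (subst poly_mapping_expand) (simp add: scal_def Const_def mult_single)
    also have "\<dots> \<in> VS.span B"
    proof (intro VS.span_sum VS.span_scale VS.span_base)
      fix \<mu> assume \<mu>: "\<mu> \<in> Poly_Mapping.keys f"
      have deg: "Poly_Mapping.lookup \<mu> a0 + Poly_Mapping.lookup \<mu> a1 = dA"
        "Poly_Mapping.lookup \<mu> b0 + Poly_Mapping.lookup \<mu> b1 = dB"
        "Poly_Mapping.keys \<mu> \<subseteq> {0, 1, 2, 3}"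
        using f \<mu> unfolding Vg_def inR_def by auto
      have "\<mu> = mono dA dB (Poly_Mapping.lookup \<mu> a0) (Poly_Mapping.lookup \<mu> b0)"
      proof (rule poly_mapping_eqI)
        fix v
        show "Poly_Mapping.lookup \<mu> v = Poly_Mapping.lookup (mono dA dB (Poly_Mapping.lookup \<mu> a0) (Poly_Mapping.lookup \<mu> b0)) v"
        proof (cases "v \<in> {a0, a1, b0, b1}")
          case True
          then show ?thesis using dist deg by (auto simp: mono_def lookup_add lookup_single)
        next
          case False
          then have "v \<notin> Poly_Mapping.keys \<mu>" using deg(3) vars by auto
          then show ?thesis using False by (auto simp: mono_def lookup_add lookup_single in_keys_iff)
        qed
      qed
      moreover have "Poly_Mapping.lookup \<mu> a0 \<le> dA" "Poly_Mapping.lookup \<mu> b0 \<le> dB" using deg by auto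
      ultimately show "Poly_Mapping.single \<mu> 1 \<in> B" unfolding B_def by force
    qed
    finally show ?thesis .
  qed
  then show ?thesis using fin card by blast
qed

end



lemma sum_set_distinct_nth:
  fixes F :: "'a \<Rightarrow> 'b::comm_monoid_add"
  assumes "distinct xs"
  shows "(\<Sum>R\<in>set xs. F R) = (\<Sum>r<length xs. F (xs ! r))"
proof -
  have "(\<Sum>R\<in>set xs. F R) = sum_list (map F xs)" using assms by (simp add: sum_list_distinct_conv_sum_set)
  also have "\<dots> = (\<Sum>r<length xs. F (xs ! r))"
    by (simp add: sum_list_sum_nth atLeast0LessThan)
  finally show ?thesis .
qed

lemma sum_mset_sum_fun:
  "(\<Sum>a\<in>#(\<Sum>r\<in>I. A r). f a) = (\<Sum>r\<in>I. (\<Sum>a\<in>#A r. f a))"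
  by (induction I rule: infinite_finite_induct) auto

lemma size_sum_fun: "size (\<Sum>r\<in>I. (A r :: 'a multiset)) = (\<Sum>r\<in>I. size (A r))"
  by (induction I rule: infinite_finite_induct) auto

lemma sum_mset_map_upt:
  "(\<Sum>a\<in>#mset (map g [0..<n]). f a) = (\<Sum>k<n. f (g k))"
proof -
  have "(\<Sum>a\<in>#mset (map g [0..<n]). f a) = sum_list (map f (map g [0..<n]))"
    by (metis mset_map sum_mset_sum_list)
  also have "\<dots> = sum_list (map (f \<circ> g) [0..<n])" by simp
  also have "\<dots> = (\<Sum>k<n. f (g k))"
    by (simp add: sum_list_sum_nth atLeast0LessThan)
  finally show ?thesis .
qed

context sides
begin

theorem core:
  fixes Zg :: "'k::alg_closed_field fatpts"
  assumes fps: "fat_point_scheme Zg" and sz: "size (alpha Zg) \<le> dA + 1"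
  shows "VS.dim (Vg dA dB :: 'k mpoly set) - VS.dim (IZg Zg \<inter> Vg dA dB) =
    (\<Sum>\<kappa>=1..dB+1. size (filter_mset (\<lambda>a. \<kappa> \<le> a) (alpha Zg)))"
proof -
  have fin1: "finite (proj1 Zg)" and fin2: "finite (proj2 Zg)" by (simp_all add: proj1_def proj2_def)
  obtain xs where xs: "distinct xs" "set xs = proj1 Zg" using finite_distinct_list[OF fin1] by metis
  obtain ys where ys: "distinct ys" "set ys = proj2 Zg" using finite_distinct_list[OF fin2] by metis
  define nR where "nR = length xs"
  define nQ where "nQ = length ys"
  define mm where "mm r s = mult Zg (xs ! r) (ys ! s)" for r s
  define l where "l r = Max ((\<lambda>Q. mult Zg (xs ! r) Q) ` proj2 Zg)" for r
  define a where "a r k = (\<Sum>s<nQ. mm r s - k)" for r k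
  define M where "M = (\<Sum>r<nR. l r)"
  have nrm_xs: "nrm p" if "p \<in> set xs" for p using that xs(2) by (auto simp: proj1_def nrm_pnorm)
  have nrm_ys: "nrm p" if "p \<in> set ys" for p using that ys(2) by (auto simp: proj2_def nrm_pnorm)
  have mm_le: "mm r s \<le> l r" if "s < nQ" for r s
    unfolding mm_def l_def using that ys(2) fin2 by (intro Max_ge) (auto simp: nQ_def)
  have alpha_eq: "alpha Zg = (\<Sum>r<nR. mset (map (a r) [0..<l r]))"
  proof -
    have "alpha Zg = (\<Sum>R\<in>set xs. mset (map (\<lambda>k. \<Sum>Q\<in>proj2 Zg. mult Zg R Q - k)
               [0..<Max ((\<lambda>Q. mult Zg R Q) ` proj2 Zg)]))"
      by (simp add: alpha_def xs(2))
    also have "\<dots> = (\<Sum>r<nR. mset (map (\<lambda>k. \<Sum>Q\<in>proj2 Zg. mult Zg (xs ! r) Q - k) [0..<l r]))"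
      by (simp add: sum_set_distinct_nth[OF xs(1)] nR_def l_def)
    also have "\<dots> = (\<Sum>r<nR. mset (map (a r) [0..<l r]))"
    proof -
      have "(\<lambda>k. \<Sum>Q\<in>proj2 Zg. mult Zg (xs ! r) Q - k) = a r" for r
        unfolding a_def mm_def nQ_def by (intro ext) (simp add: sum_set_distinct_nth[OF ys(1)] flip: ys(2))
      then show ?thesis by simp
    qed
    finally show ?thesis .
  qed
  have sizeM: "size (alpha Zg) = M"
    unfolding alpha_eq M_def by (simp add: size_sum_fun)
  obtain Rx where Rx: "nrm Rx" "Rx \<notin> set xs" using extra_point[of "set xs"] by auto
  obtain Qy where Qy: "nrm Qy" "Qy \<notin> set ys" using extra_point[of "set ys"] by auto
  define xs' where "xs' = xs @ [Rx]"
  define ys' where "ys' = ys @ [Qy]"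
  define ex where "ex r = (if r < nR then l r else dA + 1 - M)" for r
  have "\<forall>rk. \<exists>e'. (\<forall>s<nQ. e' s \<le> mm (fst rk) s - snd rk) \<and>
      (\<Sum>s<nQ. e' s) = min (\<Sum>s<nQ. mm (fst rk) s - snd rk) (dB + 1)"
    by (intro allI) (rule trunc_exists)
  then have "\<exists>ef. \<forall>rk. (\<forall>s<nQ. ef rk s \<le> mm (fst rk) s - snd rk) \<and>
      (\<Sum>s<nQ. ef rk s) = min (\<Sum>s<nQ. mm (fst rk) s - snd rk) (dB + 1)" by (rule choice)
  then obtain ef where ef0: "\<forall>rk. (\<forall>s<nQ. ef rk s \<le> mm (fst rk) s - snd rk) \<and>
      (\<Sum>s<nQ. ef rk s) = min (\<Sum>s<nQ. mm (fst rk) s - snd rk) (dB + 1)" by blast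
  have ef: "\<And>rk s. s < nQ \<Longrightarrow> ef rk s \<le> mm (fst rk) s - snd rk"
    "\<And>rk. (\<Sum>s<nQ. ef rk s) = min (a (fst rk) (snd rk)) (dB + 1)"
    using ef0 unfolding a_def by auto
  define ey where "ey rk s = (if fst rk < nR then (if s < nQ then ef rk s else dB + 1 - (\<Sum>s<nQ. ef rk s))
      else (if s < nQ then 0 else dB + 1))" for rk s
  have sum_ex: "(\<Sum>r<Suc nR. ex r) = dA + 1"
    using sz sizeM by (simp add: ex_def M_def)
  have sum_ey: "(\<Sum>s<Suc nQ. ey rk s) = dB + 1" for rk
  proof -
    have "(\<Sum>s<nQ. ey rk s) = (if fst rk < nR then (\<Sum>s<nQ. ef rk s) else 0)"
      by (simp add: ey_def)
    moreover have "(\<Sum>s<nQ. ef rk s) \<le> dB + 1" using ef(2)[of rk] by simp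
    ultimately show ?thesis by (auto simp: ey_def)
  qed
  define X where "X = (SIGMA r:{..<Suc nR}. {..<ex r})"
  define J where "J = (SIGMA rk:X. SIGMA s:{..<Suc nQ}. {..<ey rk s})"
  define L where "L = (SIGMA rk:X. {nQ} \<times> {..<ey rk nQ})"
  define E :: "(nat \<times> nat) \<times> (nat \<times> nat) \<Rightarrow> 'k mpoly" where
    "E q = test a0 a1 xs' ex dA (fst (fst q)) (snd (fst q)) * test b0 b1 ys' (ey (fst q)) dB (fst (snd q)) (snd (snd q))" for q
  define Lam :: "(nat \<times> nat) \<times> (nat \<times> nat) \<Rightarrow> 'k mpoly \<Rightarrow> 'k" where
    "Lam q = TH (xs' ! fst (fst q)) (ys' ! fst (snd q)) (snd (fst q)) (snd (snd q))" for q
  define U where "U = IZg Zg \<inter> Vg dA dB"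
  have finJ: "finite J" unfolding J_def X_def by auto
  have cardX: "card X = dA + 1" unfolding X_def using sum_ex by (simp add: card_SigmaI)
  have cardJ: "card J = (dA + 1) * (dB + 1)"
  proof -
    have "card J = (\<Sum>rk\<in>X. \<Sum>s<Suc nQ. ey rk s)"
      unfolding J_def X_def by (simp add: card_SigmaI)
    also have "\<dots> = card X * (dB + 1)" by (simp add: sum_ey del: sum.lessThan_Suc)
    finally show ?thesis using cardX by simp
  qed
  have a01: "a0 \<noteq> a1" and b01: "b0 \<noteq> b1" using dist by auto
  have lenx: "length xs' = Suc nR" and leny: "length ys' = Suc nQ"
    by (simp_all add: xs'_def ys'_def nR_def nQ_def)
  have dxs: "distinct xs'" using xs(1) Rx(2) by (simp add: xs'_def)
  have dys: "distinct ys'" using ys(1) Qy(2) by (simp add: ys'_def)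
  have nxs: "nrm p" if "p \<in> set xs'" for p
  proof -
    have "p \<in> set xs \<or> p = Rx" using that by (auto simp: xs'_def)
    then show ?thesis using nrm_xs Rx(1) by blast
  qed
  have nys: "nrm p" if "p \<in> set ys'" for p
  proof -
    have "p \<in> set ys \<or> p = Qy" using that by (auto simp: ys'_def)
    then show ?thesis using nrm_ys Qy(1) by blast
  qed
  have memJ: "((r, k), (s, b)) \<in> J \<longleftrightarrow> r < Suc nR \<and> k < ex r \<and> s < Suc nQ \<and> b < ey (r, k) s" for r k s b
    by (simp add: J_def X_def)
  have formA: "form a0 a1 dA (test a0 a1 xs' ex dA r k)" if "r < Suc nR" "k < ex r" for r k
    by (rule test_form[OF a01]) (use that lenx sum_ex in auto)
  have formB: "form b0 b1 dB (test b0 b1 ys' (ey rk) dB s b)" if "s < Suc nQ" "b < ey rk s" for rk s b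
    by (rule test_form[OF b01]) (use that leny sum_ey in auto)
  have LamE: "Lam p (E ((r, k), (s, b))) = Hs a0 a1 (xs' ! fst (fst p)) (snd (fst p)) (test a0 a1 xs' ex dA r k) *
      Hs b0 b1 (ys' ! fst (snd p)) (snd (snd p)) (test b0 b1 ys' (ey (r, k)) dB s b)"
    if "((r, k), (s, b)) \<in> J" for p r k s b
  proof -
    have i: "r < Suc nR" "k < ex r" "s < Suc nQ" "b < ey (r, k) s" using that memJ by auto
    have fA: "form a0 a1 dA (test a0 a1 xs' ex dA r k)" using formA i by blast
    have fB: "form b0 b1 dB (test b0 b1 ys' (ey (r, k)) dB s b)" using formB i by blast
    show ?thesis unfolding Lam_def E_def by (simp add: TH_split[OF fA fB])
  qed
  obtain B where B: "finite B" "card B \<le> (dA + 1) * (dB + 1)" "Vg dA dB \<subseteq> VS.span (B :: 'k mpoly set)"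
    using V_span by blast
  have memL: "((r, k), (s, b)) \<in> L \<longleftrightarrow> r < Suc nR \<and> k < ex r \<and> s = nQ \<and> b < ey (r, k) nQ" for r k s b
    by (auto simp: L_def X_def)
  have xs'_nth: "xs' ! r = xs ! r" if "r < nR" for r using that by (simp add: xs'_def nth_append nR_def)
  have ys'_nth: "ys' ! s = ys ! s" if "s < nQ" for s using that by (simp add: ys'_def nth_append nQ_def)
  have IZ_mem: "f \<in> ideal_pow (ideal_gen {lin a0 a1 P, lin b0 b1 Q}) m" if "f \<in> IZg Zg" "(P, Q, m) \<in> set Zg" for f P Q m
    using that unfolding IZg_def by auto
  have EU: "E q \<in> U" if "q \<in> L" for q
  proof -
    obtain r k s b where q: "q = ((r, k), (s, b))" by (cases q) auto
    have i: "r < Suc nR" "k < ex r" "s = nQ" "b < ey (r, k) nQ" using that q memL by auto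
    have fA: "form a0 a1 dA (test a0 a1 xs' ex dA r k)" using formA i by blast
    have fB: "form b0 b1 dB (test b0 b1 ys' (ey (r, k)) dB s b)" using formB i by auto
    have EV: "E q \<in> Vg dA dB" unfolding q E_def using prod_in_V[OF fA fB] by simp
    have "E q \<in> ideal_pow (ideal_gen {lin a0 a1 P, lin b0 b1 Q}) m" if PQ: "(P, Q, m) \<in> set Zg" for P Q m
    proof -
      have P0: "P \<noteq> (0, 0)" and Q0: "Q \<noteq> (0, 0)" using fps_entry[OF fps PQ] by auto
      have "pnorm P \<in> set xs" using PQ xs(2) by (force simp: proj1_def)
      then obtain r0 where r0: "r0 < nR" "xs ! r0 = pnorm P" by (auto simp: in_set_conv_nth nR_def)
      have "pnorm Q \<in> set ys" using PQ ys(2) by (force simp: proj2_def)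
      then obtain s0 where s0: "s0 < nQ" "ys ! s0 = pnorm Q" by (auto simp: in_set_conv_nth nQ_def)
      have m: "m = mm r0 s0" using mult_entry[OF fps PQ] r0 s0 by (simp add: mm_def)
      obtain gA where gA: "inR gA" "test a0 a1 xs' ex dA r k = lin a0 a1 (xs' ! r0) ^ (if r0 = r then k else ex r0) * gA"
        using test_factor[OF vars_in(1,2), of r0 xs' ex dA r k] r0 lenx by auto
      obtain gB where gB: "inR gB" "test b0 b1 ys' (ey (r, k)) dB s b = lin b0 b1 (ys' ! s0) ^ (if s0 = s then b else ey (r, k) s0) * gB"
        using test_factor[OF vars_in(3,4), of s0 ys' "ey (r, k)" dB s b] s0 leny by auto
      define eA where "eA = (if r0 = r then k else ex r0)"
      define eB where "eB = (if s0 = s then b else ey (r, k) s0)"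
      have eB: "eB = ey (r, k) s0" using s0 i(3) by (simp add: eB_def)
      have meq: "m \<le> eA + eB"
      proof (cases "r0 = r")
        case False
        then have "eA = l r0" using r0 by (simp add: eA_def ex_def)
        then show ?thesis using mm_le[OF s0(1), of r0] m by simp
      next
        case True
        then have rn: "r < nR" using r0 by simp
        have eAk: "eA = k" using True by (simp add: eA_def)
        have eyn: "ey (r, k) nQ = dB + 1 - (\<Sum>s<nQ. ef (r, k) s)" using rn by (simp add: ey_def)
        have "(\<Sum>s<nQ. ef (r, k) s) < dB + 1" using i(4) eyn by linarith
        then have sumeq: "(\<Sum>s<nQ. ef (r, k) s) = (\<Sum>s<nQ. mm r s - k)"
          using ef(2)[of "(r, k)"] by (simp add: a_def min_def split: if_splits)
        have "ef (r, k) s0 = mm r s0 - k"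
          by (rule sum_eq_pointwise[OF _ sumeq s0(1)]) (use ef(1)[of _ "(r, k)"] in auto)
        then have "eB = mm r s0 - k" using eB rn s0(1) by (simp add: ey_def)
        then show ?thesis using eAk m True by simp
      qed
      have "E q = (lin a0 a1 (pnorm P) ^ eA * gA) * (lin b0 b1 (pnorm Q) ^ eB * gB)"
        unfolding q E_def using gA(2) gB(2) r0 s0 xs'_nth ys'_nth by (simp add: eA_def eB_def)
      then show ?thesis using pt_pow_mem[OF P0 Q0 gA(1) gB(1) meq] by simp
    qed
    moreover have "inR (E q)" using EV unfolding Vg_def by simp
    ultimately show ?thesis using EV unfolding U_def IZg_def by auto
  qed
  have LU: "Lam p f = 0" if "p \<in> J - L" "f \<in> U" for p f
  proof -
    obtain r k s b where p: "p = ((r, k), (s, b))" by (cases p) auto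
    have i: "r < Suc nR" "k < ex r" "s < Suc nQ" "b < ey (r, k) s" using that(1) p memJ by auto
    have "s \<noteq> nQ" using that(1) p memL i by auto
    then have sn: "s < nQ" using i(3) by simp
    have rn: "r < nR"
    proof (rule ccontr)
      assume "\<not> r < nR"
      then have "ey (r, k) s = 0" using sn by (simp add: ey_def)
      then show False using i(4) by simp
    qed
    have "ey (r, k) s = ef (r, k) s" using rn sn by (simp add: ey_def)
    then have kb: "k + b < mm r s" using ef(1)[OF sn, of "(r, k)"] i(4) by simp
    then have "mult Zg (xs ! r) (ys ! s) > 0" by (simp add: mm_def)
    then obtain P Q m where PQ: "(P, Q, m) \<in> set Zg" "pnorm P = xs ! r" "pnorm Q = ys ! s"
        "m = mult Zg (xs ! r) (ys ! s)"
      using mult_pos_entry[OF fps] by blast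
    have P0: "P \<noteq> (0, 0)" and Q0: "Q \<noteq> (0, 0)" using fps_entry[OF fps PQ(1)] by auto
    have "f \<in> IZg Zg" using that(2) unfolding U_def by simp
    then have "f \<in> ideal_pow (ideal_gen {lin a0 a1 P, lin b0 b1 Q}) m" using IZ_mem PQ(1) by blast
    then have "vanish (pnorm P) (pnorm Q) m f" by (rule vanish_pt[OF P0 Q0])
    moreover have "k + b < m" using kb PQ(4) by (simp add: mm_def)
    ultimately have "TH (pnorm P) (pnorm Q) k b f = 0" unfolding vanish_def by blast
    then show ?thesis unfolding p Lam_def using PQ xs'_nth[OF rn] ys'_nth[OF sn] by simp
  qed
  have res: "VS.dim (Vg dA dB :: 'k mpoly set) = card J \<and> VS.dim U = card L"
  proof (rule tri_dims[OF finJ _ B(3) B(1)])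
    show "card B \<le> card J" using B(2) cardJ by simp
    show "E p \<in> Vg dA dB" if "p \<in> J" for p
      using that unfolding E_def by (cases p) (auto simp: memJ intro!: prod_in_V formA formB)
    show "Lam p (f + g) = Lam p f + Lam p g" for p f g by (simp add: Lam_def TH_def lf_add)
    show "Lam p (scal c f) = c * Lam p f" for p c f by (simp add: Lam_def TH_def lf_scal)
    show "L \<subseteq> J" unfolding L_def J_def by auto
    show "U \<subseteq> Vg dA dB" unfolding U_def by auto
    show "E q \<in> U" if "q \<in> L" for q using EU that .
    show "Lam p f = 0" if "p \<in> J - L" "f \<in> U" for p f using LU that .
    show "Lam p (E p) \<noteq> 0" if "p \<in> J" for p
    proof -
      obtain r k s b where p: "p = ((r, k), (s, b))" by (cases p) auto
      have "Hs a0 a1 (xs' ! r) k (test a0 a1 xs' ex dA r k) \<noteq> 0"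
        by (rule test_diag[OF a01]) (use that p dxs nxs lenx memJ in auto)
      moreover have "Hs b0 b1 (ys' ! s) b (test b0 b1 ys' (ey (r, k)) dB s b) \<noteq> 0"
        by (rule test_diag[OF b01]) (use that p dys nys leny memJ in auto)
      ultimately show ?thesis using LamE[of r k s b p] that p by simp
    qed
    show "Lam p (E q) = 0" if "p \<in> J" "q \<in> J" "p < q" for p q
    proof -
      obtain r k s b where p: "p = ((r, k), (s, b))" by (cases p) auto
      obtain r2 k2 s2 b2 where q: "q = ((r2, k2), (s2, b2))" by (cases q) auto
      have pJ: "r < Suc nR" "k < ex r" "s < Suc nQ" "b < ey (r, k) s" using that(1) p memJ by auto
      have qJ: "r2 < Suc nR" "k2 < ex r2" "s2 < Suc nQ" "b2 < ey (r2, k2) s2" using that(2) q memJ by auto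
      have "(r, k) < (r2, k2) \<or> ((r, k) = (r2, k2) \<and> (s, b) < (s2, b2))"
        using that(3) p q by (auto simp: less_prod_def)
      then show ?thesis
      proof
        assume lt: "(r, k) < (r2, k2)"
        have "Hs a0 a1 (xs' ! r) k (test a0 a1 xs' ex dA r2 k2) = 0"
        proof (rule test_zero[OF a01])
          show "r2 \<noteq> r \<or> k < k2" using lt by (auto simp: less_prod_def)
        qed (use pJ qJ lenx nxs in auto)
        then show ?thesis using LamE[of r2 k2 s2 b2 p] that(2) q p by simp
      next
        assume eq: "(r, k) = (r2, k2) \<and> (s, b) < (s2, b2)"
        have "Hs b0 b1 (ys' ! s) b (test b0 b1 ys' (ey (r, k)) dB s2 b2) = 0"
        proof (rule test_zero[OF b01])
          show "s2 \<noteq> s \<or> b < b2" using eq by (auto simp: less_prod_def)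
        qed (use pJ qJ leny nys in auto)
        then show ?thesis using LamE[of r2 k2 s2 b2 p] that(2) q p eq by simp
      qed
    qed
  qed
  have cardL: "card L = (\<Sum>rk\<in>X. ey rk nQ)"
    unfolding L_def X_def by (simp add: card_SigmaI)
  have cardJ': "card J = (\<Sum>rk\<in>X. \<Sum>s<nQ. ey rk s) + card L"
  proof -
    have "card J = (\<Sum>rk\<in>X. \<Sum>s<Suc nQ. ey rk s)"
      unfolding J_def X_def by (simp add: card_SigmaI)
    then show ?thesis unfolding cardL by (simp add: sum.distrib)
  qed
  have main: "(\<Sum>rk\<in>X. \<Sum>s<nQ. ey rk s) = (\<Sum>r<nR. \<Sum>k<l r. min (a r k) (dB + 1))"
  proof -
    have "(\<Sum>r<Suc nR. \<Sum>k<ex r. \<Sum>s<nQ. ey (r, k) s) = (\<Sum>(r, k)\<in>X. \<Sum>s<nQ. ey (r, k) s)"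
      unfolding X_def by (rule sum.Sigma) auto
    then have "(\<Sum>rk\<in>X. \<Sum>s<nQ. ey rk s) = (\<Sum>r<Suc nR. \<Sum>k<ex r. \<Sum>s<nQ. ey (r, k) s)"
      by (simp add: case_prod_beta')
    also have "\<dots> = (\<Sum>r<nR. \<Sum>k<ex r. \<Sum>s<nQ. ey (r, k) s)"
      by (simp add: ey_def)
    also have "\<dots> = (\<Sum>r<nR. \<Sum>k<l r. min (a r k) (dB + 1))"
    proof (intro sum.cong refl)
      fix r k assume r: "r \<in> {..<nR}"
      have "(\<Sum>s<nQ. ey (r, k) s) = (\<Sum>s<nQ. ef (r, k) s)" using r by (intro sum.cong) (auto simp: ey_def)
      then show "(\<Sum>s<nQ. ey (r, k) s) = min (a r k) (dB + 1)" using ef(2)[of "(r, k)"] by simp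
    qed (simp add: ex_def)
    finally show ?thesis .
  qed
  have rhs: "(\<Sum>\<kappa>=1..dB+1. size (filter_mset (\<lambda>a. \<kappa> \<le> a) (alpha Zg))) = (\<Sum>r<nR. \<Sum>k<l r. min (a r k) (dB + 1))"
    unfolding sum_filter_ge alpha_eq sum_mset_sum_fun sum_mset_map_upt ..
  show ?thesis using res cardJ' main rhs unfolding U_def by simp
qed

end



theorem theorem3p2:
  fixes Z :: "'k::alg_closed_field fatpts"
  assumes "fat_point_scheme Z"
  shows "(\<forall>i j. i + 1 \<ge> size (alpha Z) \<longrightarrow>
            HF Z i j = (\<Sum>k=1..j+1. size (filter_mset (\<lambda>a. a \<ge> k) (alpha Z))))
       \<and> (\<forall>i j. j + 1 \<ge> size (beta Z) \<longrightarrow>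
            HF Z i j = (\<Sum>k=1..i+1. size (filter_mset (\<lambda>b. b \<ge> k) (beta Z))))"
proof -
  interpret S1: sides 0 1 2 3 by unfold_locales auto
  interpret S2: sides 2 3 0 1 by unfold_locales auto
  have R1: "Rdeg i j = S1.Vg i j" for i j
    unfolding Rdeg_def S1.Vg_def bideg_def by auto
  have R2: "Rdeg i j = S2.Vg j i" for i j
    unfolding Rdeg_def S2.Vg_def bideg_def by auto
  have I1: "I_Z Z = S1.IZg Z"
    unfolding I_Z_def S1.IZg_def pt_ideal_def lin_def by simp
  define swp :: "('k \<times> 'k) \<times> ('k \<times> 'k) \<times> nat \<Rightarrow> ('k \<times> 'k) \<times> ('k \<times> 'k) \<times> nat"
    where "swp = (\<lambda>(P, Q, m). (Q, P, m))"
  define Zs where "Zs = map swp Z"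
  have I2: "I_Z Z = S2.IZg Zs"
  proof -
    have "(\<Inter>(P, Q, m)\<in>set Zs. ideal_pow (ideal_gen {lin 2 3 P, lin 0 1 Q}) m) =
      (\<Inter>(P, Q, m)\<in>set Z. ideal_pow (ideal_gen {lin 0 1 P, lin 2 3 Q}) m)"
      unfolding Zs_def swp_def by (simp add: image_image case_prod_beta insert_commute)
    then show ?thesis unfolding I_Z_def S2.IZg_def pt_ideal_def by (simp add: lin_def)
  qed
  have fps2: "fat_point_scheme Zs"
  proof -
    have "map (\<lambda>(P, Q, m). (pnorm P, pnorm Q)) Zs = map prod.swap (map (\<lambda>(P, Q, m). (pnorm P, pnorm Q)) Z)"
      by (auto simp: Zs_def swp_def)
    moreover have "distinct (map prod.swap (map (\<lambda>(P, Q, m). (pnorm P, pnorm Q)) Z))"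
    proof (rule distinct_map[THEN iffD2], rule conjI)
      show "distinct (map (\<lambda>(P, Q, m). (pnorm P, pnorm Q)) Z)" using assms by (simp add: fat_point_scheme_def)
      show "inj_on prod.swap (set (map (\<lambda>(P, Q, m). (pnorm P, pnorm Q)) Z))" by (metis inj_onI swap_swap)
    qed
    moreover have "\<forall>(P, Q, m)\<in>set Zs. P \<noteq> (0, 0) \<and> Q \<noteq> (0, 0) \<and> m > 0"
      using assms unfolding fat_point_scheme_def Zs_def swp_def by auto
    ultimately show ?thesis unfolding fat_point_scheme_def by simp
  qed
  have p1: "proj1 Zs = proj2 Z" and p2: "proj2 Zs = proj1 Z"
    by (force simp: proj1_def proj2_def Zs_def swp_def)+
  have mu: "mult Zs Q R = mult Z R Q" for Q R
  proof -
    have "filter (\<lambda>(P', Q', m). pnorm P' = Q \<and> pnorm Q' = R) Zs =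
      map swp (filter (\<lambda>(P', Q', m). pnorm P' = R \<and> pnorm Q' = Q) Z)"
      by (simp add: Zs_def filter_map comp_def swp_def case_prod_beta' conj_commute)
    then show ?thesis by (simp add: mult_def comp_def swp_def case_prod_beta')
  qed
  have ab: "beta Z = alpha Zs"
    by (simp add: alpha_def beta_def p1 p2 mu)
  show ?thesis
  proof (intro conjI allI impI)
    fix i j :: nat assume "size (alpha Z) \<le> i + 1"
    from S1.core[OF assms this, of j]
    show "HF Z i j = (\<Sum>k=1..j+1. size (filter_mset (\<lambda>a. a \<ge> k) (alpha Z)))"
      by (simp add: HF_def R1 I1)
  next
    fix i j :: nat assume "size (beta Z) \<le> j + 1"
    then have "size (alpha Zs) \<le> j + 1" by (simp add: ab)
    from S2.core[OF fps2 this, of i]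
    show "HF Z i j = (\<Sum>k=1..i+1. size (filter_mset (\<lambda>b. b \<ge> k) (beta Z)))"
      by (simp add: HF_def R2 I2 ab)
  qed
qed


end
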